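(* Let $a,b,\beta\in\mathbb{C}$ and let $d=\{te^{i\alpha}:t\ge0\}$ be a ray with $\alpha\in(0,2\pi)$ (so $d\ne\mathbb{R}^+$). Consider the convolution equation $$F(p)=\frac{1}{1-p}\Big(p-\beta\int_0^pF(s)\,ds+a\,(F*F)(p)+b\,(F*F*F)(p)\Big),\qquad p\in d.$$ There is $\nu_0>0$ such that this equation has exactly one solution $F$ in $\bigcup_{\nu\ge\nu_0}L^1_\nu(d)$.
   Context: For $\nu>0$, $L^1_\nu(d)$ is the space of measurable functions $f$ on the ray $d=\{te^{i\alpha}:t\ge0\}$ with $\|f\|_\nu=\int_0^\infty|f(te^{i\alpha})|e^{-\nu t}\,dt<\infty$. Convolution is $(f*g)(p)=\int_0^pf(s)g(p-s)\,ds$, the integral taken along the segment from $0$ to $p$ in $d$. (This equation is the Borel transform of $f'+(1-\beta x^{-1})f=x^{-2}+af^2+bf^3$.) *)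

theory Defs
  imports "HOL-Analysis.Analysis"
begin

text \<open>A function on the ray d = {t e^{i alpha} : t \<ge> 0} is represented by its
  parametrisation F :: real \<Rightarrow> complex, F t standing for F(t e^{i alpha});
  values at t < 0 are irrelevant.\<close>

definition ray_point :: "real \<Rightarrow> real \<Rightarrow> complex" where
  "ray_point \<alpha> t = complex_of_real t * exp (\<i> * complex_of_real \<alpha>)"

definition L1nu :: "real \<Rightarrow> (real \<Rightarrow> complex) set" where
  "L1nu \<nu> = {f. set_borel_measurable lborel {0..} f \<and>
                 set_integrable lborel {0..} (\<lambda>t. norm (f t) * exp (- \<nu> * t))}"

text \<open>Integral along the segment from 0 to p = t e^{i alpha}: ds = e^{i alpha} du.\<close>
definition ray_int :: "real \<Rightarrow> (real \<Rightarrow> complex) \<Rightarrow> real \<Rightarrow> complex" where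
  "ray_int \<alpha> f t = exp (\<i> * complex_of_real \<alpha>) * (LINT u:{0..t}|lborel. f u)"

definition ray_conv :: "real \<Rightarrow> (real \<Rightarrow> complex) \<Rightarrow> (real \<Rightarrow> complex) \<Rightarrow> real \<Rightarrow> complex" where
  "ray_conv \<alpha> f g t = exp (\<i> * complex_of_real \<alpha>) * (LINT u:{0..t}|lborel. f u * g (t - u))"

text \<open>F solves the convolution equation (almost everywhere on the ray, i.e. as
  an element of L^1_nu).\<close>
definition solves_eq :: "complex \<Rightarrow> complex \<Rightarrow> complex \<Rightarrow> real \<Rightarrow> (real \<Rightarrow> complex) \<Rightarrow> bool" where
  "solves_eq a b \<beta> \<alpha> F \<longleftrightarrow>
     (AE t in lborel. t \<ge> 0 \<longrightarrow>
        F t = (1 / (1 - ray_point \<alpha> t)) *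
              (ray_point \<alpha> t - \<beta> * ray_int \<alpha> F t
               + a * ray_conv \<alpha> F F t
               + b * ray_conv \<alpha> (ray_conv \<alpha> F F) F t))"

end

theory Submission
  imports Defs
begin


definition nc :: "(real \<Rightarrow> ennreal) \<Rightarrow> (real \<Rightarrow> ennreal) \<Rightarrow> real \<Rightarrow> ennreal" where
  "nc h g t = (\<integral>\<^sup>+u. indicator {0..t} u * h u * g (t - u) \<partial>lborel)"

definition Nm :: "real \<Rightarrow> (real \<Rightarrow> ennreal) \<Rightarrow> ennreal" where
  "Nm \<mu> h = (\<integral>\<^sup>+t. indicator {0..} t * h t * ennreal (exp (- \<mu> * t)) \<partial>lborel)"

lemma ind_split: "(indicator {0..(t::real)} u :: ennreal) = indicator {0..} u * indicator {0..} (t - u)"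
  by (auto simp: indicator_def)

lemma nc_alt: "nc h g t = (\<integral>\<^sup>+u. indicator {0..} u * h u * (indicator {0..} (t - u) * g (t - u)) \<partial>lborel)"
  unfolding nc_def by (simp add: ind_split mult_ac)

lemma nc_meas[measurable]:
  assumes [measurable]: "h \<in> borel_measurable borel" "g \<in> borel_measurable borel"
  shows "nc h g \<in> borel_measurable borel"
proof -
  have "(\<lambda>t. \<integral>\<^sup>+u. indicator {0..} u * h u * (indicator {0..} (t - u) * g (t - u)) \<partial>lborel) \<in> borel_measurable borel"
    by measurable
  then show ?thesis by (simp add: nc_alt[abs_def])
qed


lemma normN:
  fixes f :: "real \<Rightarrow> complex"
  shows "ennreal (norm (set_lebesgue_integral lborel A f)) \<le> (\<integral>\<^sup>+x. indicator A x * ennreal (norm (f x)) \<partial>lborel)"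
proof (cases "set_integrable lborel A f")
  case True
  then have "ennreal (norm (set_lebesgue_integral lborel A f)) \<le> (\<integral>\<^sup>+x. ennreal (norm (indicator A x *\<^sub>R f x)) \<partial>lborel)"
    unfolding set_integrable_def set_lebesgue_integral_def by (rule integral_norm_bound_ennreal)
  also have "\<dots> = (\<integral>\<^sup>+x. indicator A x * ennreal (norm (f x)) \<partial>lborel)"
    by (intro nn_integral_cong) (auto simp: indicator_def)
  finally show ?thesis .
next
  case False
  then show ?thesis unfolding set_integrable_def set_lebesgue_integral_def
    by (simp add: not_integrable_integral_eq)
qed

lemma setint_fin:
  fixes f :: "real \<Rightarrow> complex"
  assumes [measurable]: "f \<in> borel_measurable borel" "A \<in> sets borel"
    and "(\<integral>\<^sup>+x. indicator A x * ennreal (norm (f x)) \<partial>lborel) < \<infinity>"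
  shows "set_integrable lborel A f"
  unfolding set_integrable_def
proof (rule integrableI_bounded)
  show "(\<lambda>x. indicator A x *\<^sub>R f x) \<in> borel_measurable lborel" by measurable
  have "(\<integral>\<^sup>+x. ennreal (norm (indicator A x *\<^sub>R f x)) \<partial>lborel) = (\<integral>\<^sup>+x. indicator A x * ennreal (norm (f x)) \<partial>lborel)"
    by (intro nn_integral_cong) (auto simp: indicator_def)
  then show "(\<integral>\<^sup>+x. ennreal (norm (indicator A x *\<^sub>R f x)) \<partial>lborel) < \<infinity>" using assms(3) by simp
qed

lemma normD:
  fixes f1 f2 :: "real \<Rightarrow> complex"
  assumes [measurable]: "f1 \<in> borel_measurable borel" "f2 \<in> borel_measurable borel" "A \<in> sets borel"
    and "(\<integral>\<^sup>+x. indicator A x * ennreal (norm (f1 x)) \<partial>lborel) < \<infinity>"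
    and "(\<integral>\<^sup>+x. indicator A x * ennreal (norm (f2 x)) \<partial>lborel) < \<infinity>"
  shows "ennreal (norm (set_lebesgue_integral lborel A f1 - set_lebesgue_integral lborel A f2))
     \<le> (\<integral>\<^sup>+x. indicator A x * ennreal (norm (f1 x - f2 x)) \<partial>lborel)"
proof -
  have i1: "set_integrable lborel A f1" and i2: "set_integrable lborel A f2"
    using setint_fin assms by auto
  have "set_lebesgue_integral lborel A f1 - set_lebesgue_integral lborel A f2
      = set_lebesgue_integral lborel A (\<lambda>x. f1 x - f2 x)"
    using set_integral_diff(2)[OF i1 i2] by simp
  then show ?thesis using normN[of A "\<lambda>x. f1 x - f2 x"] by simp
qed


lemma shift_int:
  assumes [measurable]: "g \<in> borel_measurable borel"
  shows "(\<integral>\<^sup>+t. indicator {0..} (t - u) * g (t - u) * ennreal (exp (- \<mu> * t)) \<partial>lborel)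
       = ennreal (exp (- \<mu> * u)) * Nm \<mu> g"
proof -
  have "(\<integral>\<^sup>+t. indicator {0..} (t - u) * g (t - u) * ennreal (exp (- \<mu> * t)) \<partial>lborel)
      = (\<integral>\<^sup>+v. indicator {0..} ((u + 1 * v) - u) * g ((u + 1 * v) - u) * ennreal (exp (- \<mu> * (u + 1 * v))) \<partial>lborel)"
    by (subst nn_integral_real_affine[where c=1 and t=u]) auto
  also have "\<dots> = (\<integral>\<^sup>+v. ennreal (exp (- \<mu> * u)) * (indicator {0..} v * g v * ennreal (exp (- \<mu> * v))) \<partial>lborel)"
  proof (intro nn_integral_cong)
    fix v :: real
    have e: "exp (- \<mu> * (u + 1 * v)) = exp (- \<mu> * u) * exp (- \<mu> * v)"
      by (simp add: algebra_simps flip: exp_add)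
    show "indicator {0..} ((u + 1 * v) - u) * g ((u + 1 * v) - u) * ennreal (exp (- \<mu> * (u + 1 * v)))
       = ennreal (exp (- \<mu> * u)) * (indicator {0..} v * g v * ennreal (exp (- \<mu> * v)))"
      unfolding e by (simp add: ennreal_mult mult_ac)
  qed
  also have "\<dots> = ennreal (exp (- \<mu> * u)) * Nm \<mu> g"
    unfolding Nm_def by (subst nn_integral_cmult) auto
  finally show ?thesis .
qed

lemma Nm_nc:
  assumes [measurable]: "h \<in> borel_measurable borel" "g \<in> borel_measurable borel"
  shows "Nm \<mu> (nc h g) = Nm \<mu> h * Nm \<mu> g"
proof -
  have "Nm \<mu> (nc h g) = (\<integral>\<^sup>+t. (\<integral>\<^sup>+u. indicator {0..} u * h u * (indicator {0..} (t - u) * g (t - u) * ennreal (exp (- \<mu> * t))) \<partial>lborel) \<partial>lborel)"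
    unfolding Nm_def nc_alt
  proof (intro nn_integral_cong)
    fix t :: real
    have "indicator {0..} t * (\<integral>\<^sup>+u. indicator {0..} u * h u * (indicator {0..} (t - u) * g (t - u)) \<partial>lborel) * ennreal (exp (- \<mu> * t))
        = (\<integral>\<^sup>+u. indicator {0..} t * (indicator {0..} u * h u * (indicator {0..} (t - u) * g (t - u))) * ennreal (exp (- \<mu> * t)) \<partial>lborel)"
      by (simp add: nn_integral_cmult nn_integral_multc)
    also have "\<dots> = (\<integral>\<^sup>+u. indicator {0..} u * h u * (indicator {0..} (t - u) * g (t - u) * ennreal (exp (- \<mu> * t))) \<partial>lborel)"
      by (intro nn_integral_cong) (auto simp: indicator_def mult.assoc)
    finally show "indicator {0..} t * (\<integral>\<^sup>+u. indicator {0..} u * h u * (indicator {0..} (t - u) * g (t - u)) \<partial>lborel) * ennreal (exp (- \<mu> * t))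
        = (\<integral>\<^sup>+u. indicator {0..} u * h u * (indicator {0..} (t - u) * g (t - u) * ennreal (exp (- \<mu> * t))) \<partial>lborel)" .
  qed
  also have "\<dots> = (\<integral>\<^sup>+u. (\<integral>\<^sup>+t. indicator {0..} u * h u * (indicator {0..} (t - u) * g (t - u) * ennreal (exp (- \<mu> * t))) \<partial>lborel) \<partial>lborel)"
    by (rule lborel_pair.Fubini') measurable
  also have "\<dots> = (\<integral>\<^sup>+u. indicator {0..} u * h u * ennreal (exp (- \<mu> * u)) * Nm \<mu> g \<partial>lborel)"
  proof (intro nn_integral_cong)
    fix u :: real
    have "(\<integral>\<^sup>+t. indicator {0..} u * h u * (indicator {0..} (t - u) * g (t - u) * ennreal (exp (- \<mu> * t))) \<partial>lborel)
       = indicator {0..} u * h u * (\<integral>\<^sup>+t. indicator {0..} (t - u) * g (t - u) * ennreal (exp (- \<mu> * t)) \<partial>lborel)"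
      by (subst nn_integral_cmult[symmetric]) (auto simp: mult.assoc)
    also have "\<dots> = indicator {0..} u * h u * ennreal (exp (- \<mu> * u)) * Nm \<mu> g"
      by (subst shift_int[OF assms(2)]) (simp add: mult.assoc)
    finally show "(\<integral>\<^sup>+t. indicator {0..} u * h u * (indicator {0..} (t - u) * g (t - u) * ennreal (exp (- \<mu> * t))) \<partial>lborel)
       = indicator {0..} u * h u * ennreal (exp (- \<mu> * u)) * Nm \<mu> g" .
  qed
  also have "\<dots> = Nm \<mu> h * Nm \<mu> g"
    unfolding Nm_def by (simp add: nn_integral_multc)
  finally show ?thesis .
qed


abbreviation na :: "(real \<Rightarrow> complex) \<Rightarrow> real \<Rightarrow> ennreal" where
  "na f \<equiv> \<lambda>u. ennreal (norm (f u))"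

lemma normE[simp]: "norm (exp (\<i> * complex_of_real \<alpha>)) = 1"
  by (simp add: norm_exp_i_times)

lemma ind_split_real: "(indicator {0..(t::real)} u :: real) = indicator {0..} u * indicator {0..} (t - u)"
  by (auto simp: indicator_def)

lemma ray_conv_meas[measurable]:
  assumes [measurable]: "f \<in> borel_measurable borel" "g \<in> borel_measurable borel"
  shows "ray_conv \<alpha> f g \<in> borel_measurable borel"
proof -
  have "(\<lambda>t. exp (\<i> * complex_of_real \<alpha>) * (\<integral>u. (indicator {0..} u * indicator {0..} (t - u)) *\<^sub>R (f u * g (t - u)) \<partial>lborel)) \<in> borel_measurable borel"
    by measurable
  then show ?thesis
    unfolding ray_conv_def[abs_def] set_lebesgue_integral_def ind_split_real .
qed

lemma ray_int_meas[measurable]: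
  assumes [measurable]: "f \<in> borel_measurable borel"
  shows "ray_int \<alpha> f \<in> borel_measurable borel"
proof -
  have "(\<lambda>t. exp (\<i> * complex_of_real \<alpha>) * (\<integral>u. (indicator {0..} u * indicator {0..} (t - u)) *\<^sub>R (f u) \<partial>lborel)) \<in> borel_measurable borel"
    by measurable
  then show ?thesis
    unfolding ray_int_def[abs_def] set_lebesgue_integral_def ind_split_real .
qed

lemma R1: "ennreal (norm (ray_int \<alpha> f t)) \<le> nc (na f) (\<lambda>_. 1) t"
  unfolding ray_int_def nc_def using normN[of "{0..t}" f] by (simp add: norm_mult)

lemma R2: "ennreal (norm (ray_conv \<alpha> f g t)) \<le> nc (na f) (na g) t"
  unfolding ray_conv_def nc_def using normN[of "{0..t}" "\<lambda>u. f u * g (t - u)"]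
  by (simp add: norm_mult ennreal_mult mult.assoc)

lemma R3:
  assumes [measurable]: "f \<in> borel_measurable borel" "f' \<in> borel_measurable borel"
    and "nc (na f) (\<lambda>_. 1) t < \<infinity>" "nc (na f') (\<lambda>_. 1) t < \<infinity>"
  shows "ennreal (norm (ray_int \<alpha> f t - ray_int \<alpha> f' t)) \<le> nc (na (\<lambda>u. f u - f' u)) (\<lambda>_. 1) t"
proof -
  have "ennreal (norm (ray_int \<alpha> f t - ray_int \<alpha> f' t)) = ennreal (norm (set_lebesgue_integral lborel {0..t} f - set_lebesgue_integral lborel {0..t} f'))"
    unfolding ray_int_def by (simp add: norm_mult flip: right_diff_distrib)
  also have "\<dots> \<le> nc (na (\<lambda>u. f u - f' u)) (\<lambda>_. 1) t"
    using normD[of f f' "{0..t}"] assms unfolding nc_def by simp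
  finally show ?thesis .
qed

lemma R4:
  assumes [measurable]: "f1 \<in> borel_measurable borel" "g1 \<in> borel_measurable borel"
    "f2 \<in> borel_measurable borel" "g2 \<in> borel_measurable borel"
    and "nc (na f1) (na g1) t < \<infinity>" "nc (na f2) (na g2) t < \<infinity>"
  shows "ennreal (norm (ray_conv \<alpha> f1 g1 t - ray_conv \<alpha> f2 g2 t))
     \<le> nc (na (\<lambda>u. f1 u - f2 u)) (na g1) t + nc (na f2) (na (\<lambda>u. g1 u - g2 u)) t"
proof -
  have "ennreal (norm (ray_conv \<alpha> f1 g1 t - ray_conv \<alpha> f2 g2 t)) = ennreal (norm (set_lebesgue_integral lborel {0..t} (\<lambda>u. f1 u * g1 (t - u)) - set_lebesgue_integral lborel {0..t} (\<lambda>u. f2 u * g2 (t - u))))"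
    unfolding ray_conv_def by (simp add: norm_mult flip: right_diff_distrib)
  also have "\<dots> \<le> (\<integral>\<^sup>+u. indicator {0..t} u * ennreal (norm (f1 u * g1 (t - u) - f2 u * g2 (t - u))) \<partial>lborel)"
    using assms(5,6) by (intro normD) (auto simp: nc_def norm_mult ennreal_mult mult.assoc)
  also have "\<dots> \<le> (\<integral>\<^sup>+u. indicator {0..t} u * na (\<lambda>u. f1 u - f2 u) u * na g1 (t - u)
                   + indicator {0..t} u * na f2 u * na (\<lambda>u. g1 u - g2 u) (t - u) \<partial>lborel)"
  proof (intro nn_integral_mono)
    fix u
    have "norm (f1 u * g1 (t - u) - f2 u * g2 (t - u)) = norm ((f1 u - f2 u) * g1 (t - u) + f2 u * (g1 (t - u) - g2 (t - u)))"
      by (simp add: algebra_simps)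
    also have "\<dots> \<le> norm (f1 u - f2 u) * norm (g1 (t - u)) + norm (f2 u) * norm (g1 (t - u) - g2 (t - u))"
      by (metis norm_mult norm_triangle_ineq)
    finally have "ennreal (norm (f1 u * g1 (t - u) - f2 u * g2 (t - u))) \<le> ennreal (norm (f1 u - f2 u) * norm (g1 (t - u)) + norm (f2 u) * norm (g1 (t - u) - g2 (t - u)))"
      by (rule ennreal_leI)
    also have "\<dots> = ennreal (norm (f1 u - f2 u)) * ennreal (norm (g1 (t - u))) + ennreal (norm (f2 u)) * ennreal (norm (g1 (t - u) - g2 (t - u)))"
      by (simp add: ennreal_plus ennreal_mult)
    finally have "ennreal (norm (f1 u * g1 (t - u) - f2 u * g2 (t - u))) \<le> ennreal (norm (f1 u - f2 u)) * ennreal (norm (g1 (t - u))) + ennreal (norm (f2 u)) * ennreal (norm (g1 (t - u) - g2 (t - u)))" .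
    then show "indicator {0..t} u * ennreal (norm (f1 u * g1 (t - u) - f2 u * g2 (t - u))) \<le> indicator {0..t} u * na (\<lambda>u. f1 u - f2 u) u * na g1 (t - u)
                   + indicator {0..t} u * na f2 u * na (\<lambda>u. g1 u - g2 u) (t - u)"
      by (auto simp: indicator_def)
  qed
  also have "\<dots> = nc (na (\<lambda>u. f1 u - f2 u)) (na g1) t + nc (na f2) (na (\<lambda>u. g1 u - g2 u)) t"
    unfolding nc_def by (rule nn_integral_add) measurable
  finally show ?thesis .
qed

lemma nc_mono_AE:
  assumes "AE u in lborel. 0 \<le> u \<longrightarrow> h u \<le> h' u"
  shows "nc h g t \<le> nc h' g t"
  unfolding nc_def
  by (rule nn_integral_mono_AE) (use assms in \<open>eventually_elim, auto simp: indicator_def intro!: mult_right_mono\<close>)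


lemma Nm_meas_aux[measurable]: assumes [measurable]: "h \<in> borel_measurable borel" shows
   "(\<lambda>t. indicator {0..} t * h t * ennreal (exp (- \<mu> * t))) \<in> borel_measurable borel"
  by measurable

lemma Nm_mono_mu:
  assumes "\<nu> \<le> \<mu>" shows "Nm \<mu> h \<le> Nm \<nu> h"
  unfolding Nm_def
proof (intro nn_integral_mono)
  fix t :: real
  show "indicator {0..} t * h t * ennreal (exp (- \<mu> * t)) \<le> indicator {0..} t * h t * ennreal (exp (- \<nu> * t))"
  proof (cases "0 \<le> t")
    case True
    then have "exp (- \<mu> * t) \<le> exp (- \<nu> * t)" using assms by (simp add: mult_right_mono)
    then show ?thesis by (intro mult_left_mono ennreal_leI) auto
  qed (simp add: indicator_def)
qed

lemma Nm_mono:
  assumes "\<And>t. 0 \<le> t \<Longrightarrow> h t \<le> g t" shows "Nm \<mu> h \<le> Nm \<mu> g"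
  unfolding Nm_def by (intro nn_integral_mono) (auto simp: indicator_def assms intro!: mult_right_mono)

lemma Nm_mono_AE:
  assumes "AE t in lborel. 0 \<le> t \<longrightarrow> h t \<le> g t" shows "Nm \<mu> h \<le> Nm \<mu> g"
  unfolding Nm_def by (intro nn_integral_mono_AE) (use assms in \<open>eventually_elim, auto simp: indicator_def intro!: mult_right_mono\<close>)

lemma Nm_add:
  assumes [measurable]: "h \<in> borel_measurable borel" "g \<in> borel_measurable borel"
  shows "Nm \<mu> (\<lambda>t. h t + g t) = Nm \<mu> h + Nm \<mu> g"
  unfolding Nm_def by (subst nn_integral_add[symmetric]) (auto intro!: nn_integral_cong simp: distrib_left distrib_right)

lemma Nm_cmult:
  assumes [measurable]: "h \<in> borel_measurable borel"
  shows "Nm \<mu> (\<lambda>t. c * h t) = c * Nm \<mu> h"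
  unfolding Nm_def by (subst nn_integral_cmult[symmetric]) (auto intro!: nn_integral_cong simp: mult_ac)

lemma Nm_fin_AE:
  assumes [measurable]: "h \<in> borel_measurable borel" and "Nm \<mu> h < \<infinity>"
  shows "AE t in lborel. 0 \<le> t \<longrightarrow> h t < \<infinity>"
proof -
  have "AE t in lborel. indicator {0..} t * h t * ennreal (exp (- \<mu> * t)) \<noteq> \<infinity>"
    using assms unfolding Nm_def by (intro nn_integral_PInf_AE) auto
  then show ?thesis
    by eventually_elim (auto simp: indicator_def ennreal_mult_eq_top_iff top.not_eq_extremum)
qed

lemma Nm_decay:
  assumes [measurable]: "h \<in> borel_measurable borel" and "Nm \<nu> h < \<infinity>"
  shows "(\<lambda>n. Nm (\<nu> + real n) h) \<longlonglongrightarrow> 0"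
proof -
  have "(\<lambda>n. \<integral>\<^sup>+t. indicator {0..} t * h t * ennreal (exp (- (\<nu> + real n) * t)) \<partial>lborel)
        \<longlonglongrightarrow> (\<integral>\<^sup>+(t::real). 0 \<partial>lborel)"
  proof (rule nn_integral_dominated_convergence[where u'="\<lambda>t. 0" and u="\<lambda>n t. indicator {0..} t * h t * ennreal (exp (- (\<nu> + real n) * t))" and w="\<lambda>t. indicator {0..} t * h t * ennreal (exp (- \<nu> * t))"])
    show "(\<integral>\<^sup>+t. indicator {0..} t * h t * ennreal (exp (- \<nu> * t)) \<partial>lborel) < \<infinity>"
      using assms(2) unfolding Nm_def .
    show "AE t in lborel. indicator {0..} t * h t * ennreal (exp (- (\<nu> + real j) * t)) \<le> indicator {0..} t * h t * ennreal (exp (- \<nu> * t))" for j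
    proof (intro AE_I2)
      fix t :: real
      show "indicator {0..} t * h t * ennreal (exp (- (\<nu> + real j) * t)) \<le> indicator {0..} t * h t * ennreal (exp (- \<nu> * t))"
      proof (cases "0 \<le> t")
        case True
        then have "exp (- (\<nu> + real j) * t) \<le> exp (- \<nu> * t)" by (simp add: algebra_simps)
        then show ?thesis by (intro mult_left_mono ennreal_leI) auto
      qed (simp add: indicator_def)
    qed
    show "AE t in lborel. (\<lambda>n. indicator {0..} t * h t * ennreal (exp (- (\<nu> + real n) * t))) \<longlonglongrightarrow> 0"
      using AE_lborel_singleton[of 0] Nm_fin_AE[OF assms]
    proof eventually_elim
      case (elim t)
      show ?case
      proof (cases "0 < t")
        case True
        have "(\<lambda>n. exp (- (\<nu> + real n) * t)) \<longlonglongrightarrow> 0"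
        proof -
          have e: "exp (- (\<nu> + real n) * t) = exp (- \<nu> * t) * exp (- t) ^ n" for n
            by (simp add: algebra_simps flip: exp_of_nat_mult exp_add)
          have "(\<lambda>n. exp (- \<nu> * t) * exp (- t) ^ n) \<longlonglongrightarrow> 0"
            using True by (intro tendsto_mult_right_zero LIMSEQ_power_zero) auto
          then show ?thesis unfolding e .
        qed
        then have "(\<lambda>n. ennreal (exp (- (\<nu> + real n) * t))) \<longlonglongrightarrow> ennreal 0"
          by (intro tendsto_ennrealI)
        then have "(\<lambda>n. indicator {0..} t * h t * ennreal (exp (- (\<nu> + real n) * t))) \<longlonglongrightarrow> indicator {0..} t * h t * ennreal 0"
          using elim True by (intro tendsto_mult_ennreal) (auto simp: indicator_def ennreal_mult_eq_top_iff)
        then show ?thesis by simp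
      next
        case False
        with elim show ?thesis by (simp add: indicator_def)
      qed
    qed
  qed measurable
  then show ?thesis unfolding Nm_def by simp
qed


lemma Nm_one: assumes "0 < \<mu>" shows "Nm \<mu> (\<lambda>_. 1) = ennreal (1 / \<mu>)"
proof -
  have "Nm \<mu> (\<lambda>_. 1) = (\<integral>\<^sup>+t. ennreal (exp (- \<mu> * t)) * indicator {0..} t \<partial>lborel)"
    unfolding Nm_def by (simp add: mult_ac)
  also have "\<dots> = ennreal (exp (- \<mu> * 0) / \<mu>)"
    by (rule nn_integral_has_integral_lebesgue') (use has_integral_exp_minus_to_infinity[OF assms, of 0] in auto)
  finally show ?thesis by simp
qed

lemma test_Nm_B:
  assumes [measurable]: "F \<in> borel_measurable borel" "G \<in> borel_measurable borel" "H \<in> borel_measurable borel"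
  shows "Nm \<mu> (\<lambda>t. ennreal K * (ennreal (norm \<beta>) * nc (na H) (\<lambda>_. 1) t
      + ennreal (norm a) * (nc (na H) (na G) t + nc (na F) (na H) t)
      + ennreal (norm b) * (nc (\<lambda>u. nc (na H) (na G) u + nc (na F) (na H) u) (na G) t + nc (nc (na F) (na F)) (na H) t)))
   = ennreal K * (ennreal (norm \<beta>) * (Nm \<mu> (na H) * Nm \<mu> (\<lambda>_. 1))
      + ennreal (norm a) * (Nm \<mu> (na H) * Nm \<mu> (na G) + Nm \<mu> (na F) * Nm \<mu> (na H))
      + ennreal (norm b) * ((Nm \<mu> (na H) * Nm \<mu> (na G) + Nm \<mu> (na F) * Nm \<mu> (na H)) * Nm \<mu> (na G) + (Nm \<mu> (na F) * Nm \<mu> (na F)) * Nm \<mu> (na H)))"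
  apply (subst Nm_cmult, measurable)
  apply (subst Nm_add, measurable)+
  apply (subst Nm_cmult, measurable)+
  apply (subst Nm_add, measurable)+
  apply (subst Nm_nc, measurable)+
  apply (subst Nm_add, measurable)+
  apply (subst Nm_nc, measurable)+
  done


lemma ennreal_half_zero:
  fixes x :: ennreal
  assumes "x \<le> ennreal (1/2) * x" "x < \<infinity>" shows "x = 0"
proof -
  obtain r where r: "x = ennreal r" "0 \<le> r" using assms(2) by (cases x) auto
  have m: "ennreal (1/2) * ennreal r = ennreal (r / 2)" using r by (subst ennreal_mult[symmetric]) auto
  have "ennreal r \<le> ennreal (r / 2)" using assms(1) unfolding r(1) m .
  then have "r \<le> r / 2" using r by (simp add: ennreal_le_iff)
  then show ?thesis using r by simp
qed

lemma ennreal_poly: "0 \<le> K \<Longrightarrow> 0 \<le> x \<Longrightarrow> 0 \<le> y \<Longrightarrow> 0 \<le> z \<Longrightarrow> 0 \<le> e \<Longrightarrow>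
  ennreal K * (ennreal x * ennreal e + ennreal y * (ennreal e + ennreal e) + ennreal z * ((ennreal e + ennreal e) * ennreal e + ennreal e * ennreal e))
  = ennreal (K * (x * e + y * (e + e) + z * ((e + e) * e + e * e)))"
  by (simp del: ennreal_plus add: ennreal_plus[symmetric] ennreal_mult[symmetric] algebra_simps)

lemma ring_aux: fixes k x y z h n1 nF nG :: "'a::comm_semiring_1"
  shows "k * (x * (h * n1) + y * (h * nG + nF * h) + z * ((h * nG + nF * h) * nG + (nF * nF) * h))
   = (k * (x * n1 + y * (nG + nF) + z * ((nG + nF) * nG + nF * nF))) * h"
  by (simp add: algebra_simps)

lemma e_ineq: "0 \<le> (nb::real) \<Longrightarrow> 0 \<le> xa \<Longrightarrow> 0 \<le> e \<Longrightarrow> nb * ((e + e) * e + e * e) \<le> nb * (3 * e) \<Longrightarrow>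
  nbe * e + xa * (e + e) + nb * ((e + e) * e + e * e) \<le> (nbe + 2 * xa + 3 * nb) * e"
  by (simp add: algebra_simps)

lemma uniq_core:
  fixes F G :: "real \<Rightarrow> complex"
  assumes Fm[measurable]: "F \<in> borel_measurable borel" and Gm[measurable]: "G \<in> borel_measurable borel"
    and nF: "Nm \<nu> (na F) < \<infinity>" and nG: "Nm \<nu> (na G) < \<infinity>" and nu: "0 < \<nu>"
    and K: "\<And>t. 0 \<le> t \<Longrightarrow> norm (1 / (1 - ray_point \<alpha> t)) \<le> K"
    and sF: "solves_eq a b \<beta> \<alpha> F" and sG: "solves_eq a b \<beta> \<alpha> G"
  shows "AE t in lborel. 0 \<le> t \<longrightarrow> G t = F t"
proof -
  define H where "H = (\<lambda>t. G t - F t)"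
  have Hm[measurable]: "H \<in> borel_measurable borel" unfolding H_def by measurable
  have K0: "0 \<le> K" using K[of 0] by (simp add: ray_point_def)
  define C where "C = K * (norm \<beta> + 2 * norm a + 3 * norm b)"
  have C0: "0 \<le> C" unfolding C_def using K0 by simp
  define e where "e = 1 / (2 * C + 2)"
  have e0: "0 < e" and e1: "e \<le> 1" and Ce: "C * e \<le> 1/2"
    using C0 by (auto simp: e_def field_simps)
  have n1: "Nm \<nu> (\<lambda>_. 1) < \<infinity>" using Nm_one[OF nu] by simp
  have lim1: "(\<lambda>n. Nm (\<nu> + real n) (\<lambda>_. 1)) \<longlonglongrightarrow> 0" by (rule Nm_decay[OF _ n1]) simp
  have limF: "(\<lambda>n. Nm (\<nu> + real n) (na F)) \<longlonglongrightarrow> 0" by (rule Nm_decay[OF _ nF]) simp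
  have limG: "(\<lambda>n. Nm (\<nu> + real n) (na G)) \<longlonglongrightarrow> 0" by (rule Nm_decay[OF _ nG]) simp
  have ev: "\<forall>\<^sub>F n in sequentially. Nm (\<nu> + real n) (\<lambda>_. 1) < ennreal e \<and> Nm (\<nu> + real n) (na F) < ennreal e
     \<and> Nm (\<nu> + real n) (na G) < ennreal e"
    using order_tendstoD(2)[OF lim1, of "ennreal e"] order_tendstoD(2)[OF limF, of "ennreal e"]
      order_tendstoD(2)[OF limG, of "ennreal e"] e0
    by (auto intro: eventually_conj)
  then obtain n where nn: "Nm (\<nu> + real n) (\<lambda>_. 1) < ennreal e" "Nm (\<nu> + real n) (na F) < ennreal e"
     "Nm (\<nu> + real n) (na G) < ennreal e"
    by (auto simp: eventually_sequentially)
  define \<mu> where "\<mu> = \<nu> + real n"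
  have mu: "\<nu> \<le> \<mu>" unfolding \<mu>_def by simp
  have a1: "Nm \<mu> (\<lambda>_. 1) \<le> ennreal e" and aF: "Nm \<mu> (na F) \<le> ennreal e" and aG: "Nm \<mu> (na G) \<le> ennreal e"
    using nn unfolding \<mu>_def by auto
  have fin1: "Nm \<mu> (\<lambda>_. 1) < \<infinity>" and finF: "Nm \<mu> (na F) < \<infinity>" and finG: "Nm \<mu> (na G) < \<infinity>"
    using le_less_trans[OF a1 ennreal_less_top] le_less_trans[OF aF ennreal_less_top]
      le_less_trans[OF aG ennreal_less_top] by auto
  have finH: "Nm \<mu> (na H) < \<infinity>"
  proof -
    have "Nm \<mu> (na H) \<le> Nm \<mu> (\<lambda>t. na G t + na F t)"
    proof (rule Nm_mono)
      fix t :: real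
      have "norm (H t) \<le> norm (G t) + norm (F t)" unfolding H_def by (rule norm_triangle_ineq4)
      then show "na H t \<le> na G t + na F t" by (simp add: ennreal_plus[symmetric] ennreal_leI del: ennreal_plus)
    qed
    also have "\<dots> = Nm \<mu> (na G) + Nm \<mu> (na F)" by (rule Nm_add) measurable
    finally have "Nm \<mu> (na H) \<le> Nm \<mu> (na G) + Nm \<mu> (na F)" .
    moreover have "Nm \<mu> (na G) + Nm \<mu> (na F) < \<infinity>" using finF finG by simp
    ultimately show ?thesis by (rule le_less_trans)
  qed
  have f1: "AE t in lborel. 0 \<le> t \<longrightarrow> nc (na G) (\<lambda>_. 1) t < \<infinity>"
    by (rule Nm_fin_AE) (use finG fin1 in \<open>auto simp: Nm_nc ennreal_mult_less_top\<close>)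
  have f2: "AE t in lborel. 0 \<le> t \<longrightarrow> nc (na F) (\<lambda>_. 1) t < \<infinity>"
    by (rule Nm_fin_AE) (use finF fin1 in \<open>auto simp: Nm_nc ennreal_mult_less_top\<close>)
  have f3: "AE t in lborel. 0 \<le> t \<longrightarrow> nc (na G) (na G) t < \<infinity>"
    by (rule Nm_fin_AE) (use finG in \<open>auto simp: Nm_nc ennreal_mult_less_top\<close>)
  have f4: "AE t in lborel. 0 \<le> t \<longrightarrow> nc (na F) (na F) t < \<infinity>"
    by (rule Nm_fin_AE) (use finF in \<open>auto simp: Nm_nc ennreal_mult_less_top\<close>)
  have f5: "AE t in lborel. 0 \<le> t \<longrightarrow> nc (nc (na G) (na G)) (na G) t < \<infinity>"
    by (rule Nm_fin_AE) (use finG in \<open>auto simp: Nm_nc ennreal_mult_less_top\<close>)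
  have f6: "AE t in lborel. 0 \<le> t \<longrightarrow> nc (nc (na F) (na F)) (na F) t < \<infinity>"
    by (rule Nm_fin_AE) (use finF in \<open>auto simp: Nm_nc ennreal_mult_less_top\<close>)
  define B where "B = (\<lambda>t. ennreal K * (ennreal (norm \<beta>) * nc (na H) (\<lambda>_. 1) t
      + ennreal (norm a) * (nc (na H) (na G) t + nc (na F) (na H) t)
      + ennreal (norm b) * (nc (\<lambda>u. nc (na H) (na G) u + nc (na F) (na H) u) (na G) t + nc (nc (na F) (na F)) (na H) t)))"
  have bound: "AE t in lborel. 0 \<le> t \<longrightarrow> na H t \<le> B t"
    using f1 f2 f3 f4 f5 f6 sF sG unfolding solves_eq_def
  proof eventually_elim
    case (elim t)
    show ?case
    proof
      assume t: "0 \<le> t"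
      define q where "q = 1 / (1 - ray_point \<alpha> t)"
      define dI where "dI = ray_int \<alpha> G t - ray_int \<alpha> F t"
      define dC where "dC = ray_conv \<alpha> G G t - ray_conv \<alpha> F F t"
      define dT where "dT = ray_conv \<alpha> (ray_conv \<alpha> G G) G t - ray_conv \<alpha> (ray_conv \<alpha> F F) F t"
      have eF: "F t = q * (ray_point \<alpha> t - \<beta> * ray_int \<alpha> F t + a * ray_conv \<alpha> F F t + b * ray_conv \<alpha> (ray_conv \<alpha> F F) F t)"
        unfolding q_def using elim t by blast
      have eG: "G t = q * (ray_point \<alpha> t - \<beta> * ray_int \<alpha> G t + a * ray_conv \<alpha> G G t + b * ray_conv \<alpha> (ray_conv \<alpha> G G) G t)"
        unfolding q_def using elim t by blast
      have "H t = G t - F t" unfolding H_def by simp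
      also have "\<dots> = q * (- \<beta> * dI + a * dC + b * dT)"
        unfolding eF eG dI_def dC_def dT_def by (simp add: algebra_simps)
      finally have "H t = q * (- \<beta> * dI + a * dC + b * dT)" .
      then have "norm (H t) \<le> K * (norm \<beta> * norm dI + norm a * norm dC + norm b * norm dT)"
      proof -
        assume h: "H t = q * (- \<beta> * dI + a * dC + b * dT)"
        have "norm (- \<beta> * dI + a * dC + b * dT) \<le> norm \<beta> * norm dI + norm a * norm dC + norm b * norm dT"
          by (rule order_trans[OF norm_triangle_ineq] add_mono order_trans[OF norm_triangle_ineq4] )+ (auto simp: norm_mult)
        moreover have "norm q \<le> K" unfolding q_def using K[OF t] .
        ultimately show ?thesis unfolding h norm_mult
          using K0 by (intro mult_mono) auto
      qed
      then have "na H t \<le> ennreal (K * (norm \<beta> * norm dI + norm a * norm dC + norm b * norm dT))"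
        by (rule ennreal_leI)
      also have "\<dots> = ennreal K * (ennreal (norm \<beta>) * ennreal (norm dI) + ennreal (norm a) * ennreal (norm dC) + ennreal (norm b) * ennreal (norm dT))"
        using K0 by (simp add: ennreal_mult ennreal_plus)
      also have "\<dots> \<le> B t"
        unfolding B_def
      proof (intro mult_left_mono add_mono order_refl)
        show "ennreal (norm dI) \<le> nc (na H) (\<lambda>_. 1) t"
          unfolding dI_def H_def using elim t by (intro R3) auto
        show "ennreal (norm dC) \<le> nc (na H) (na G) t + nc (na F) (na H) t"
          unfolding dC_def H_def using elim t by (intro R4) auto
        have "ennreal (norm dT) \<le> nc (na (\<lambda>u. ray_conv \<alpha> G G u - ray_conv \<alpha> F F u)) (na G) t
             + nc (na (ray_conv \<alpha> F F)) (na H) t"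
          unfolding dT_def H_def
        proof (intro R4)
          show "nc (na (ray_conv \<alpha> G G)) (na G) t < \<infinity>"
            using nc_mono_AE[of "na (ray_conv \<alpha> G G)" "nc (na G) (na G)" "na G" t] R2 elim t
            by (auto dest: le_less_trans)
          show "nc (na (ray_conv \<alpha> F F)) (na F) t < \<infinity>"
            using nc_mono_AE[of "na (ray_conv \<alpha> F F)" "nc (na F) (na F)" "na F" t] R2 elim t
            by (auto dest: le_less_trans)
        qed measurable
        also have "\<dots> \<le> nc (\<lambda>u. nc (na H) (na G) u + nc (na F) (na H) u) (na G) t + nc (nc (na F) (na F)) (na H) t"
        proof (intro add_mono nc_mono_AE)
          show "AE u in lborel. 0 \<le> u \<longrightarrow> na (\<lambda>u. ray_conv \<alpha> G G u - ray_conv \<alpha> F F u) u \<le> nc (na H) (na G) u + nc (na F) (na H) u"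
            using f3 f4
          proof eventually_elim
            case (elim u)
            then show ?case unfolding H_def by (auto intro: R4)
          qed
          show "AE u in lborel. 0 \<le> u \<longrightarrow> na (ray_conv \<alpha> F F) u \<le> nc (na F) (na F) u"
            using R2 by auto
        qed
        finally show "ennreal (norm dT) \<le> nc (\<lambda>u. nc (na H) (na G) u + nc (na F) (na H) u) (na G) t + nc (nc (na F) (na F)) (na H) t" .
      qed auto
      finally show "na H t \<le> B t" .
    qed
  qed
  define nH where "nH = Nm \<mu> (na H)"
  have "nH \<le> Nm \<mu> B" unfolding nH_def by (rule Nm_mono_AE[OF bound])
  also have "Nm \<mu> B = ennreal K * (ennreal (norm \<beta>) * (nH * Nm \<mu> (\<lambda>_. 1))
      + ennreal (norm a) * (nH * Nm \<mu> (na G) + Nm \<mu> (na F) * nH)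
      + ennreal (norm b) * ((nH * Nm \<mu> (na G) + Nm \<mu> (na F) * nH) * Nm \<mu> (na G) + (Nm \<mu> (na F) * Nm \<mu> (na F)) * nH))"
    unfolding B_def nH_def by (rule test_Nm_B) measurable
  also have "\<dots> = (ennreal K * (ennreal (norm \<beta>) * Nm \<mu> (\<lambda>_. 1)
      + ennreal (norm a) * (Nm \<mu> (na G) + Nm \<mu> (na F))
      + ennreal (norm b) * ((Nm \<mu> (na G) + Nm \<mu> (na F)) * Nm \<mu> (na G) + Nm \<mu> (na F) * Nm \<mu> (na F)))) * nH"
    by (rule ring_aux)
  also have "\<dots> \<le> (ennreal K * (ennreal (norm \<beta>) * ennreal e
      + ennreal (norm a) * (ennreal e + ennreal e)
      + ennreal (norm b) * ((ennreal e + ennreal e) * ennreal e + ennreal e * ennreal e))) * nH"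
    by (intro mult_right_mono mult_left_mono add_mono mult_mono a1 aF aG order_refl) auto
  also have "\<dots> = ennreal (K * (norm \<beta> * e + norm a * (e + e) + norm b * ((e + e) * e + e * e))) * nH"
    by (subst ennreal_poly[of K "norm \<beta>" "norm a" "norm b" e]) (use K0 e0 in auto)
  also have "\<dots> \<le> ennreal (1/2) * nH"
  proof (intro mult_right_mono ennreal_leI)
    have "e * e \<le> e" using e0 e1 by (simp add: mult_le_cancel_left1)
    then have "norm b * ((e + e) * e + e * e) \<le> norm b * (3 * e)" by (intro mult_left_mono) auto
    then have "norm \<beta> * e + norm a * (e + e) + norm b * ((e + e) * e + e * e) \<le> (norm \<beta> + 2 * norm a + 3 * norm b) * e"
      using e0 by (intro e_ineq) auto
    then have "K * (norm \<beta> * e + norm a * (e + e) + norm b * ((e + e) * e + e * e)) \<le> C * e"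
      unfolding C_def using K0 by (simp add: mult.assoc mult_left_mono)
    then show "K * (norm \<beta> * e + norm a * (e + e) + norm b * ((e + e) * e + e * e)) \<le> 1/2" using Ce by simp
  qed auto
  finally have "nH = 0" by (rule ennreal_half_zero) (use finH nH_def in simp)
  then have "AE t in lborel. indicator {0..} t * na H t * ennreal (exp (- \<mu> * t)) = 0"
    unfolding nH_def Nm_def by (subst (asm) nn_integral_0_iff_AE) auto
  then show ?thesis
    by eventually_elim (auto simp: indicator_def H_def)
qed


definition w :: "real \<Rightarrow> real \<Rightarrow> real" where
  "w \<nu> t = exp (\<nu> * t) / (1 + t)^2"

lemma w_pos: "0 \<le> t \<Longrightarrow> 0 < w \<nu> t"
  unfolding w_def by (simp add: add_nonneg_pos)

lemma ftc_nn:
  fixes f f' :: "real \<Rightarrow> real"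
  assumes "0 \<le> t" and d: "\<And>x. x \<in> {0..t} \<Longrightarrow> (f has_real_derivative f' x) (at x within {0..t})"
    and nn: "\<And>x. x \<in> {0..t} \<Longrightarrow> 0 \<le> f' x"
  shows "(\<integral>\<^sup>+x. ennreal (f' x) * indicator {0..t} x \<partial>lborel) = ennreal (f t - f 0)"
proof (rule nn_integral_has_integral_lebesgue')
  show "(f' has_integral f t - f 0) {0..t}"
    using assms by (intro fundamental_theorem_of_calculus) (auto simp: has_real_derivative_iff_has_vector_derivative)
qed (use nn in auto)

lemma aux1: fixes y e \<nu> :: real assumes "y \<noteq> 0"
  shows "(e * \<nu> * y^2 - e * (2 * y)) / (y^2 * y^2) = e * (\<nu> * y - 2) / y^3"
proof -
  have "(e * \<nu> * y^2 - e * (2 * y)) = (e * (\<nu> * y - 2) * y)" by (simp add: algebra_simps power2_eq_square)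
  moreover have "y^2 * y^2 = y^3 * y" by (simp add: power2_eq_square power3_eq_cube)
  ultimately show ?thesis using assms by simp
qed

lemma aux2: fixes y e :: real assumes "y \<noteq> 0"
  shows "e / y^2 = e * y / y^3"
  using assms by (simp add: power2_eq_square power3_eq_cube)

lemma deriv_w:
  assumes "0 \<le> x"
  shows "((\<lambda>u. exp (\<nu> * u) / (1 + u)^2) has_real_derivative exp (\<nu> * x) * (\<nu> * (1 + x) - 2) / (1 + x)^3) (at x within S)"
proof -
  have x: "1 + x \<noteq> 0" using assms by simp
  have "((\<lambda>u. exp (\<nu> * u) / (1 + u)^2) has_real_derivative (exp (\<nu> * x) * \<nu> * (1 + x)^2 - exp (\<nu> * x) * (2 * (1 + x))) / ((1 + x)^2 * (1 + x)^2)) (at x within S)"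
    using x by (auto intro!: derivative_eq_intros)
  then show ?thesis
    by (rule DERIV_cong) (rule aux1[OF x])
qed

lemma W1:
  assumes nu: "4 \<le> \<nu>" and t: "0 \<le> t"
  shows "(\<integral>\<^sup>+u. indicator {0..t} u * ennreal (w \<nu> u) \<partial>lborel) \<le> ennreal (2 * w \<nu> t / \<nu>)"
proof -
  define W' where "W' x = 2 / \<nu> * (exp (\<nu> * x) * (\<nu> * (1 + x) - 2) / (1 + x)^3)" for x
  have le: "w \<nu> x \<le> W' x" if "0 \<le> x" for x
  proof -
    have "w \<nu> x = exp (\<nu> * x) * (1 + x) / (1 + x)^3" unfolding w_def using that
      by (intro aux2) simp
    also have "\<dots> \<le> exp (\<nu> * x) * (2 / \<nu> * (\<nu> * (1 + x) - 2)) / (1 + x)^3"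
    proof (intro divide_right_mono mult_left_mono)
      have "(1 + x) * \<nu> \<le> 2 * (\<nu> * (1 + x) - 2)" using nu that
        by (simp add: algebra_simps) (smt (verit) mult_nonneg_nonneg)
      then show "1 + x \<le> 2 / \<nu> * (\<nu> * (1 + x) - 2)" using nu by (simp add: field_simps)
    qed (use that in auto)
    also have "\<dots> = W' x" unfolding W'_def by (simp add: field_simps)
    finally show ?thesis .
  qed
  have "(\<integral>\<^sup>+u. indicator {0..t} u * ennreal (w \<nu> u) \<partial>lborel) \<le> (\<integral>\<^sup>+u. ennreal (W' u) * indicator {0..t} u \<partial>lborel)"
    by (intro nn_integral_mono) (auto simp: indicator_def le ennreal_leI)
  also have "\<dots> = ennreal (2 / \<nu> * (exp (\<nu> * t) / (1 + t)^2) - 2 / \<nu> * (exp (\<nu> * 0) / (1 + 0)^2))"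
  proof (rule ftc_nn[OF t])
    fix x assume x: "x \<in> {0..t}"
    show "((\<lambda>u. 2 / \<nu> * (exp (\<nu> * u) / (1 + u)^2)) has_real_derivative W' x) (at x within {0..t})"
      unfolding W'_def using x by (intro DERIV_cmult deriv_w) auto
    show "0 \<le> W' x" using le[of x] w_pos[of x \<nu>] x by auto
  qed
  also have "\<dots> \<le> ennreal (2 * w \<nu> t / \<nu>)"
    using nu by (intro ennreal_leI) (simp add: w_def mult.commute)
  finally show ?thesis .
qed


lemma phi1_int:
  assumes t: "0 \<le> t"
  shows "(\<integral>\<^sup>+u. ennreal (1 / (1 + u)^2) * indicator {0..t} u \<partial>lborel) \<le> 1"
proof -
  have "(\<integral>\<^sup>+u. ennreal (1 / (1 + u)^2) * indicator {0..t} u \<partial>lborel) = ennreal ((- 1 / (1 + t)) - (- 1 / (1 + 0)))"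
  proof (rule ftc_nn[OF t])
    fix x assume x: "x \<in> {0..t}"
    then have x1: "1 + x \<noteq> 0" by auto
    show "((\<lambda>u. - 1 / (1 + u)) has_real_derivative 1 / (1 + x)^2) (at x within {0..t})"
      using x1 by (auto intro!: derivative_eq_intros simp: power2_eq_square field_simps)
    show "0 \<le> 1 / (1 + x)^2" by simp
  qed
  also have "\<dots> \<le> ennreal 1" using t by (intro ennreal_leI) simp
  finally show ?thesis by simp
qed

lemma phi2_int:
  assumes t: "0 \<le> t"
  shows "(\<integral>\<^sup>+u. ennreal (1 / (1 + t - u)^2) * indicator {0..t} u \<partial>lborel) \<le> 1"
proof -
  have "(\<integral>\<^sup>+u. ennreal (1 / (1 + t - u)^2) * indicator {0..t} u \<partial>lborel) = ennreal ((1 / (1 + t - t)) - (1 / (1 + t - 0)))"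
  proof (rule ftc_nn[OF t])
    fix x assume x: "x \<in> {0..t}"
    then have x1: "1 + t - x \<noteq> 0" by auto
    show "((\<lambda>u. 1 / (1 + t - u)) has_real_derivative 1 / (1 + t - x)^2) (at x within {0..t})"
      using x1 by (auto intro!: derivative_eq_intros simp: power2_eq_square field_simps)
    show "0 \<le> 1 / (1 + t - x)^2" by simp
  qed
  also have "\<dots> \<le> ennreal 1" using t by (intro ennreal_leI) simp
  finally show ?thesis by simp
qed

lemma w_prod:
  assumes u: "0 \<le> u" "u \<le> t"
  shows "w \<nu> u * w \<nu> (t - u) \<le> 4 * w \<nu> t * (1 / (1 + u)^2 + 1 / (1 + t - u)^2)"
proof -
  define A where "A = 1 + u"
  define B where "B = 1 + t - u"
  have A: "0 < A" and B: "0 < B" using u by (auto simp: A_def B_def)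
  have AB: "1 + t \<le> A + B" unfolding A_def B_def using u by simp
  have t1: "0 < 1 + t" using u by simp
  have "(1 + t)^2 \<le> (A + B)^2" using AB t1 by (intro power_mono) auto
  also have "\<dots> \<le> 2 * (A^2 + B^2)"
  proof -
    have "0 \<le> (A - B) * (A - B)" by simp
    then show ?thesis by (simp add: power2_eq_square algebra_simps)
  qed
  finally have key: "(1 + t)^2 \<le> 2 * (A^2 + B^2)" .
  have e: "exp (\<nu> * u) * exp (\<nu> * (t - u)) = exp (\<nu> * t)" by (simp flip: exp_add add: algebra_simps)
  have "w \<nu> u * w \<nu> (t - u) = exp (\<nu> * t) * (1 / (A^2 * B^2))"
    unfolding w_def A_def B_def using e by (simp add: field_simps)
  also have "\<dots> \<le> exp (\<nu> * t) * (4 / (1 + t)^2 * (1 / A^2 + 1 / B^2))"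
  proof (intro mult_left_mono)
    have "1 / (A^2 * B^2) * (1 + t)^2 \<le> 1 / (A^2 * B^2) * (4 * (A^2 + B^2))"
    proof (intro mult_left_mono)
      show "(1 + t)^2 \<le> 4 * (A^2 + B^2)" using key zero_le_power2[of A] zero_le_power2[of B] by (smt (verit))
    qed simp
    also have "\<dots> = 4 * (1 / A^2 + 1 / B^2)" using A B by (simp add: field_simps)
    finally show "1 / (A^2 * B^2) \<le> 4 / (1 + t)^2 * (1 / A^2 + 1 / B^2)"
      using t1 by (simp add: field_simps)
  qed simp
  also have "\<dots> = 4 * w \<nu> t * (1 / (1 + u)^2 + 1 / (1 + t - u)^2)"
    unfolding w_def A_def B_def by simp
  finally show ?thesis .
qed

lemma W2:
  assumes t: "0 \<le> t"
  shows "(\<integral>\<^sup>+u. indicator {0..t} u * ennreal (w \<nu> u * w \<nu> (t - u)) \<partial>lborel) \<le> ennreal (8 * w \<nu> t)"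
proof -
  have "(\<integral>\<^sup>+u. indicator {0..t} u * ennreal (w \<nu> u * w \<nu> (t - u)) \<partial>lborel)
     \<le> (\<integral>\<^sup>+u. ennreal (4 * w \<nu> t) * (ennreal (1 / (1 + u)^2) * indicator {0..t} u)
          + ennreal (4 * w \<nu> t) * (ennreal (1 / (1 + t - u)^2) * indicator {0..t} u) \<partial>lborel)"
  proof (intro nn_integral_mono)
    fix u
    show "indicator {0..t} u * ennreal (w \<nu> u * w \<nu> (t - u)) \<le> ennreal (4 * w \<nu> t) * (ennreal (1 / (1 + u)^2) * indicator {0..t} u)
          + ennreal (4 * w \<nu> t) * (ennreal (1 / (1 + t - u)^2) * indicator {0..t} u)"
    proof (cases "u \<in> {0..t}")
      case True
      then have "ennreal (w \<nu> u * w \<nu> (t - u)) \<le> ennreal (4 * w \<nu> t * (1 / (1 + u)^2 + 1 / (1 + t - u)^2))"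
        by (intro ennreal_leI w_prod) auto
      also have "\<dots> = ennreal (4 * w \<nu> t) * ennreal (1 / (1 + u)^2) + ennreal (4 * w \<nu> t) * ennreal (1 / (1 + t - u)^2)"
        using w_pos[OF t, of \<nu>] by (simp only: distrib_left ennreal_plus mult_nonneg_nonneg ennreal_mult zero_le_divide_1_iff zero_le_power2 order.strict_implies_order zero_le_numeral)
      finally show ?thesis using True by simp
    qed simp
  qed
  also have "\<dots> = ennreal (4 * w \<nu> t) * (\<integral>\<^sup>+u. ennreal (1 / (1 + u)^2) * indicator {0..t} u \<partial>lborel)
          + ennreal (4 * w \<nu> t) * (\<integral>\<^sup>+u. ennreal (1 / (1 + t - u)^2) * indicator {0..t} u \<partial>lborel)"
    by (subst nn_integral_add) (auto simp: nn_integral_cmult)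
  also have "\<dots> \<le> ennreal (4 * w \<nu> t) * 1 + ennreal (4 * w \<nu> t) * 1"
    by (intro add_mono mult_left_mono phi1_int phi2_int t) auto
  also have "\<dots> = ennreal (8 * w \<nu> t)"
    by (simp only: mult_1_right, subst ennreal_plus[symmetric]) (use w_pos[OF t, of \<nu>] in auto)
  finally show ?thesis .
qed


definition bnd :: "real \<Rightarrow> (real \<Rightarrow> complex) \<Rightarrow> real \<Rightarrow> bool" where
  "bnd \<nu> f r \<longleftrightarrow> (\<forall>t\<ge>0. norm (f t) \<le> r * w \<nu> t)"

lemma w_meas[measurable]: "w \<nu> \<in> borel_measurable borel"
  unfolding w_def[abs_def] by measurable

lemma bnd_nonneg: "bnd \<nu> f r \<Longrightarrow> 0 \<le> r"
  unfolding bnd_def using w_pos[of 0 \<nu>] by (metis norm_ge_zero order_trans zero_le_mult_iff order.refl not_le)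

lemma EI:
  assumes "bnd \<nu> f r" "4 \<le> \<nu>" "0 \<le> t"
  shows "nc (na f) (\<lambda>_. 1) t \<le> ennreal (r * (2 * w \<nu> t / \<nu>))"
proof -
  have r: "0 \<le> r" using bnd_nonneg[OF assms(1)] .
  have "nc (na f) (\<lambda>_. 1) t \<le> (\<integral>\<^sup>+u. ennreal r * (indicator {0..t} u * ennreal (w \<nu> u)) \<partial>lborel)"
    unfolding nc_def
  proof (intro nn_integral_mono)
    fix u
    show "indicator {0..t} u * na f u * 1 \<le> ennreal r * (indicator {0..t} u * ennreal (w \<nu> u))"
    proof (cases "u \<in> {0..t}")
      case True
      then have "ennreal (norm (f u)) \<le> ennreal (r * w \<nu> u)"
        using assms(1) unfolding bnd_def by (intro ennreal_leI) auto
      also have "\<dots> = ennreal r * ennreal (w \<nu> u)" using r w_pos[of u \<nu>] True by (simp add: ennreal_mult)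
      finally show ?thesis using True by simp
    qed simp
  qed
  also have "\<dots> = ennreal r * (\<integral>\<^sup>+u. indicator {0..t} u * ennreal (w \<nu> u) \<partial>lborel)"
    by (rule nn_integral_cmult) measurable
  also have "\<dots> \<le> ennreal r * ennreal (2 * w \<nu> t / \<nu>)"
    by (intro mult_left_mono W1 assms) auto
  also have "\<dots> = ennreal (r * (2 * w \<nu> t / \<nu>))"
    using r w_pos[OF assms(3), of \<nu>] assms(2) by (subst ennreal_mult[symmetric]) auto
  finally show ?thesis .
qed

lemma EC:
  assumes "bnd \<nu> f r" "bnd \<nu> g s" "0 \<le> t"
  shows "nc (na f) (na g) t \<le> ennreal (r * s * (8 * w \<nu> t))"
proof -
  have r: "0 \<le> r" "0 \<le> s" using bnd_nonneg assms by auto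
  have "nc (na f) (na g) t \<le> (\<integral>\<^sup>+u. ennreal (r * s) * (indicator {0..t} u * ennreal (w \<nu> u * w \<nu> (t - u))) \<partial>lborel)"
    unfolding nc_def
  proof (intro nn_integral_mono)
    fix u
    show "indicator {0..t} u * na f u * na g (t - u) \<le> ennreal (r * s) * (indicator {0..t} u * ennreal (w \<nu> u * w \<nu> (t - u)))"
    proof (cases "u \<in> {0..t}")
      case True
      then have "norm (f u) * norm (g (t - u)) \<le> (r * w \<nu> u) * (s * w \<nu> (t - u))"
        using assms r w_pos[of u \<nu>] unfolding bnd_def by (intro mult_mono) auto
      then have "ennreal (norm (f u) * norm (g (t - u))) \<le> ennreal (r * s * (w \<nu> u * w \<nu> (t - u)))"
        by (intro ennreal_leI) (simp add: mult_ac)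
      then show ?thesis using True r w_pos[of u \<nu>] w_pos[of "t - u" \<nu>]
        by (simp add: ennreal_mult[symmetric])
    qed simp
  qed
  also have "\<dots> = ennreal (r * s) * (\<integral>\<^sup>+u. indicator {0..t} u * ennreal (w \<nu> u * w \<nu> (t - u)) \<partial>lborel)"
    by (rule nn_integral_cmult) measurable
  also have "\<dots> \<le> ennreal (r * s) * ennreal (8 * w \<nu> t)"
    by (intro mult_left_mono W2 assms) auto
  also have "\<dots> = ennreal (r * s * (8 * w \<nu> t))"
    using r w_pos[OF assms(3), of \<nu>] by (subst ennreal_mult[symmetric]) auto
  finally show ?thesis .
qed

lemma ennreal_to_real_le: "ennreal x \<le> ennreal y \<Longrightarrow> 0 \<le> y \<Longrightarrow> x \<le> y"
  by (simp add: ennreal_le_iff)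

lemma int_bound:
  assumes "bnd \<nu> f r" "4 \<le> \<nu>" "0 \<le> t"
  shows "norm (ray_int \<alpha> f t) \<le> r * (2 * w \<nu> t / \<nu>)"
proof (rule ennreal_to_real_le)
  show "ennreal (norm (ray_int \<alpha> f t)) \<le> ennreal (r * (2 * w \<nu> t / \<nu>))"
    by (rule order_trans[OF R1 EI[OF assms]])
  show "0 \<le> r * (2 * w \<nu> t / \<nu>)"
    using bnd_nonneg[OF assms(1)] w_pos[OF assms(3), of \<nu>] assms(2) by simp
qed

lemma conv_bound:
  assumes "bnd \<nu> f r" "bnd \<nu> g s" "0 \<le> t"
  shows "norm (ray_conv \<alpha> f g t) \<le> r * s * (8 * w \<nu> t)"
proof (rule ennreal_to_real_le)
  show "ennreal (norm (ray_conv \<alpha> f g t)) \<le> ennreal (r * s * (8 * w \<nu> t))"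
    by (rule order_trans[OF R2 EC[OF assms]])
  show "0 \<le> r * s * (8 * w \<nu> t)"
    using bnd_nonneg[OF assms(1)] bnd_nonneg[OF assms(2)] w_pos[OF assms(3), of \<nu>] by simp
qed

lemma conv_bnd:
  assumes "bnd \<nu> f r" "bnd \<nu> g s"
  shows "bnd \<nu> (ray_conv \<alpha> f g) (r * s * 8)"
  using conv_bound[OF assms] unfolding bnd_def by (simp add: mult_ac)

lemma int_diff:
  assumes [measurable]: "f \<in> borel_measurable borel" "g \<in> borel_measurable borel"
    and "bnd \<nu> f r" "bnd \<nu> g r" "bnd \<nu> (\<lambda>t. f t - g t) d" "4 \<le> \<nu>" "0 \<le> t"
  shows "norm (ray_int \<alpha> f t - ray_int \<alpha> g t) \<le> d * (2 * w \<nu> t / \<nu>)"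
proof (rule ennreal_to_real_le)
  have "ennreal (norm (ray_int \<alpha> f t - ray_int \<alpha> g t)) \<le> nc (na (\<lambda>u. f u - g u)) (\<lambda>_. 1) t"
    by (rule R3) (use le_less_trans[OF EI[OF assms(3,6,7)] ennreal_less_top] le_less_trans[OF EI[OF assms(4,6,7)] ennreal_less_top] in auto)
  also have "\<dots> \<le> ennreal (d * (2 * w \<nu> t / \<nu>))" by (rule EI[OF assms(5,6,7)])
  finally show "ennreal (norm (ray_int \<alpha> f t - ray_int \<alpha> g t)) \<le> ennreal (d * (2 * w \<nu> t / \<nu>))" .
  show "0 \<le> d * (2 * w \<nu> t / \<nu>)" using bnd_nonneg[OF assms(5)] w_pos[OF assms(7), of \<nu>] assms(6) by simp
qed

lemma conv_diff:
  assumes [measurable]: "f \<in> borel_measurable borel" "g \<in> borel_measurable borel"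
     "f' \<in> borel_measurable borel" "g' \<in> borel_measurable borel"
    and b: "bnd \<nu> f r" "bnd \<nu> g s" "bnd \<nu> f' r'" "bnd \<nu> g' s'"
      "bnd \<nu> (\<lambda>t. f t - f' t) d1" "bnd \<nu> (\<lambda>t. g t - g' t) d2" and t: "0 \<le> t"
  shows "norm (ray_conv \<alpha> f g t - ray_conv \<alpha> f' g' t) \<le> (d1 * s + r' * d2) * (8 * w \<nu> t)"
proof (rule ennreal_to_real_le)
  have "ennreal (norm (ray_conv \<alpha> f g t - ray_conv \<alpha> f' g' t)) \<le> nc (na (\<lambda>u. f u - f' u)) (na g) t + nc (na f') (na (\<lambda>u. g u - g' u)) t"
    by (rule R4) (use le_less_trans[OF EC[OF b(1,2) t] ennreal_less_top] le_less_trans[OF EC[OF b(3,4) t] ennreal_less_top] in auto)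
  also have "\<dots> \<le> ennreal (d1 * s * (8 * w \<nu> t)) + ennreal (r' * d2 * (8 * w \<nu> t))"
    by (intro add_mono EC b t)
  also have "\<dots> = ennreal ((d1 * s + r' * d2) * (8 * w \<nu> t))"
    using bnd_nonneg[OF b(2)] bnd_nonneg[OF b(3)] bnd_nonneg[OF b(5)] bnd_nonneg[OF b(6)] w_pos[OF t, of \<nu>]
    by (subst ennreal_plus[symmetric]) (auto simp: algebra_simps)
  finally show "ennreal (norm (ray_conv \<alpha> f g t - ray_conv \<alpha> f' g' t)) \<le> ennreal ((d1 * s + r' * d2) * (8 * w \<nu> t))" .
  show "0 \<le> (d1 * s + r' * d2) * (8 * w \<nu> t)"
    using bnd_nonneg[OF b(2)] bnd_nonneg[OF b(3)] bnd_nonneg[OF b(5)] bnd_nonneg[OF b(6)] w_pos[OF t, of \<nu>] by simp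
qed


definition Tm :: "complex \<Rightarrow> complex \<Rightarrow> complex \<Rightarrow> real \<Rightarrow> (real \<Rightarrow> complex) \<Rightarrow> real \<Rightarrow> complex" where
  "Tm a b \<beta> \<alpha> f t = (if 0 \<le> t then 1 / (1 - ray_point \<alpha> t) *
       (ray_point \<alpha> t - \<beta> * ray_int \<alpha> f t + a * ray_conv \<alpha> f f t + b * ray_conv \<alpha> (ray_conv \<alpha> f f) f t) else 0)"

lemma ray_point_meas[measurable]: "ray_point \<alpha> \<in> borel_measurable borel"
  unfolding ray_point_def[abs_def] by measurable

lemma Tm_meas[measurable]:
  assumes [measurable]: "f \<in> borel_measurable borel"
  shows "Tm a b \<beta> \<alpha> f \<in> borel_measurable borel"
  unfolding Tm_def[abs_def] by measurable

lemma norm_ray_point: "norm (ray_point \<alpha> t) = \<bar>t\<bar>"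
  unfolding ray_point_def by (simp add: norm_mult)

locale exset =
  fixes a b \<beta> :: complex and \<alpha> K \<nu> r :: real
  assumes K: "\<And>t. 0 \<le> t \<Longrightarrow> norm (1 / (1 - ray_point \<alpha> t)) \<le> K"
    and nu4: "4 \<le> \<nu>"
    and c1: "\<And>t. 0 \<le> t \<Longrightarrow> K * t \<le> r / 2 * w \<nu> t"
    and c2: "K * norm \<beta> * (2 / \<nu>) \<le> 1/4"
    and c3: "K * (16 * norm a * r + 192 * norm b * r^2) \<le> 1/4"
    and r0: "0 < r" and r1: "r \<le> 1"
begin

lemma K0: "0 \<le> K" using K[of 0] by (simp add: ray_point_def)

lemma T_bnd:
  assumes [measurable]: "f \<in> borel_measurable borel" and bf: "bnd \<nu> f r"
  shows "bnd \<nu> (Tm a b \<beta> \<alpha> f) r"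
  unfolding bnd_def
proof (intro allI impI)
  fix t :: real assume t: "0 \<le> t"
  define q where "q = 1 / (1 - ray_point \<alpha> t)"
  define I where "I = ray_int \<alpha> f t"
  define C where "C = ray_conv \<alpha> f f t"
  define D where "D = ray_conv \<alpha> (ray_conv \<alpha> f f) f t"
  have wt: "0 < w \<nu> t" using w_pos[OF t] .
  have hI: "norm I \<le> r * (2 * w \<nu> t / \<nu>)" unfolding I_def by (rule int_bound[OF bf nu4 t])
  have hC: "norm C \<le> r * r * (8 * w \<nu> t)" unfolding C_def by (rule conv_bound[OF bf bf t])
  have hD: "norm D \<le> (r * r * 8) * r * (8 * w \<nu> t)" unfolding D_def by (rule conv_bound[OF conv_bnd[OF bf bf] bf t])
  have "norm (Tm a b \<beta> \<alpha> f t) = norm q * norm (ray_point \<alpha> t - \<beta> * I + a * C + b * D)"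
    unfolding Tm_def q_def I_def C_def D_def by (simp only: if_P[OF t] norm_mult)
  also have "\<dots> \<le> K * (t + norm \<beta> * (r * (2 * w \<nu> t / \<nu>)) + norm a * (r * r * (8 * w \<nu> t)) + norm b * ((r * r * 8) * r * (8 * w \<nu> t)))"
  proof (intro mult_mono)
    show "norm q \<le> K" unfolding q_def by (rule K[OF t])
    have "norm (ray_point \<alpha> t - \<beta> * I + a * C + b * D) \<le> norm (ray_point \<alpha> t) + norm \<beta> * norm I + norm a * norm C + norm b * norm D"
      by (rule order_trans[OF norm_triangle_ineq] add_mono order_trans[OF norm_triangle_ineq4])+ (auto simp: norm_mult)
    also have "\<dots> \<le> t + norm \<beta> * (r * (2 * w \<nu> t / \<nu>)) + norm a * (r * r * (8 * w \<nu> t)) + norm b * ((r * r * 8) * r * (8 * w \<nu> t))"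
      using t by (intro add_mono mult_left_mono hI hC hD) (auto simp: norm_ray_point)
    finally show "norm (ray_point \<alpha> t - \<beta> * I + a * C + b * D) \<le> t + norm \<beta> * (r * (2 * w \<nu> t / \<nu>)) + norm a * (r * r * (8 * w \<nu> t)) + norm b * ((r * r * 8) * r * (8 * w \<nu> t))" .
  qed (use K0 in auto)
  also have "\<dots> = K * t + (K * norm \<beta> * (2 / \<nu>)) * (r * w \<nu> t) + (K * (8 * norm a * r + 64 * norm b * r^2)) * (r * w \<nu> t)"
    by (simp add: algebra_simps power2_eq_square)
  also have "\<dots> \<le> r / 2 * w \<nu> t + 1/4 * (r * w \<nu> t) + 1/4 * (r * w \<nu> t)"
  proof (intro add_mono c1 t mult_right_mono c2)
    have "K * (8 * norm a * r + 64 * norm b * r^2) \<le> K * (16 * norm a * r + 192 * norm b * r^2)"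
      using K0 r0 by (intro mult_left_mono add_mono) auto
    then show "K * (8 * norm a * r + 64 * norm b * r^2) \<le> 1/4" using c3 by simp
  qed (use r0 wt in auto)
  also have "\<dots> = r * w \<nu> t" by simp
  finally show "norm (Tm a b \<beta> \<alpha> f t) \<le> r * w \<nu> t" .
qed

lemma T_contr:
  assumes [measurable]: "f \<in> borel_measurable borel" "g \<in> borel_measurable borel"
    and bf: "bnd \<nu> f r" and bg: "bnd \<nu> g r" and bd: "bnd \<nu> (\<lambda>t. f t - g t) d"
  shows "bnd \<nu> (\<lambda>t. Tm a b \<beta> \<alpha> f t - Tm a b \<beta> \<alpha> g t) (d / 2)"
  unfolding bnd_def
proof (intro allI impI)
  fix t :: real assume t: "0 \<le> t"
  define q where "q = 1 / (1 - ray_point \<alpha> t)"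
  define dI where "dI = ray_int \<alpha> f t - ray_int \<alpha> g t"
  define dC where "dC = ray_conv \<alpha> f f t - ray_conv \<alpha> g g t"
  define dD where "dD = ray_conv \<alpha> (ray_conv \<alpha> f f) f t - ray_conv \<alpha> (ray_conv \<alpha> g g) g t"
  have wt: "0 < w \<nu> t" using w_pos[OF t] .
  have d0: "0 \<le> d" using bnd_nonneg[OF bd] .
  have hI: "norm dI \<le> d * (2 * w \<nu> t / \<nu>)" unfolding dI_def by (rule int_diff[OF _ _ bf bg bd nu4 t]) auto
  have hC: "norm dC \<le> (d * r + r * d) * (8 * w \<nu> t)" unfolding dC_def by (rule conv_diff[OF _ _ _ _ bf bf bg bg bd bd t]) auto
  have bC: "bnd \<nu> (\<lambda>t. ray_conv \<alpha> f f t - ray_conv \<alpha> g g t) ((d * r + r * d) * 8)"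
    unfolding bnd_def using conv_diff[OF _ _ _ _ bf bf bg bg bd bd] by (simp add: mult_ac)
  have hD: "norm dD \<le> (((d * r + r * d) * 8) * r + (r * r * 8) * d) * (8 * w \<nu> t)"
    unfolding dD_def by (rule conv_diff[OF _ _ _ _ conv_bnd[OF bf bf] bf conv_bnd[OF bg bg] bg bC bd t]) auto
  have "Tm a b \<beta> \<alpha> f t - Tm a b \<beta> \<alpha> g t = q * (- \<beta> * dI + a * dC + b * dD)"
    using t unfolding Tm_def q_def dI_def dC_def dD_def by (simp add: algebra_simps)
  then have "norm (Tm a b \<beta> \<alpha> f t - Tm a b \<beta> \<alpha> g t) = norm q * norm (- \<beta> * dI + a * dC + b * dD)"
    by (simp add: norm_mult)
  also have "\<dots> \<le> K * (norm \<beta> * (d * (2 * w \<nu> t / \<nu>)) + norm a * ((d * r + r * d) * (8 * w \<nu> t))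
                 + norm b * ((((d * r + r * d) * 8) * r + (r * r * 8) * d) * (8 * w \<nu> t)))"
  proof (intro mult_mono)
    show "norm q \<le> K" unfolding q_def by (rule K[OF t])
    have "norm (- \<beta> * dI + a * dC + b * dD) \<le> norm \<beta> * norm dI + norm a * norm dC + norm b * norm dD"
      by (rule order_trans[OF norm_triangle_ineq] add_mono)+ (auto simp: norm_mult)
    also have "\<dots> \<le> norm \<beta> * (d * (2 * w \<nu> t / \<nu>)) + norm a * ((d * r + r * d) * (8 * w \<nu> t))
                 + norm b * ((((d * r + r * d) * 8) * r + (r * r * 8) * d) * (8 * w \<nu> t))"
      by (intro add_mono mult_left_mono hI hC hD) auto
    finally show "norm (- \<beta> * dI + a * dC + b * dD) \<le> norm \<beta> * (d * (2 * w \<nu> t / \<nu>)) + norm a * ((d * r + r * d) * (8 * w \<nu> t))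
                 + norm b * ((((d * r + r * d) * 8) * r + (r * r * 8) * d) * (8 * w \<nu> t))" .
  qed (use K0 in auto)
  also have "\<dots> = (K * norm \<beta> * (2 / \<nu>)) * (d * w \<nu> t) + (K * (16 * norm a * r + 192 * norm b * r^2)) * (d * w \<nu> t)"
    by (simp add: algebra_simps power2_eq_square)
  also have "\<dots> \<le> 1/4 * (d * w \<nu> t) + 1/4 * (d * w \<nu> t)"
    by (intro add_mono mult_right_mono c2 c3) (use d0 wt in auto)
  also have "\<dots> = d / 2 * w \<nu> t" by simp
  finally show "norm (Tm a b \<beta> \<alpha> f t - Tm a b \<beta> \<alpha> g t) \<le> d / 2 * w \<nu> t" .
qed

end


context exset
begin

definition fs :: "nat \<Rightarrow> real \<Rightarrow> complex" where
  "fs n = (Tm a b \<beta> \<alpha> ^^ n) (\<lambda>_. 0)"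

lemma fs_0: "fs 0 = (\<lambda>_. 0)" and fs_Suc: "fs (Suc n) = Tm a b \<beta> \<alpha> (fs n)"
  unfolding fs_def by auto

lemma fs_props: "fs n \<in> borel_measurable borel \<and> bnd \<nu> (fs n) r \<and> (\<forall>t<0. fs n t = 0)"
proof (induction n)
  case 0
  then show ?case using r0 w_pos[of _ \<nu>] by (auto simp: fs_0 bnd_def less_imp_le)
next
  case (Suc n)
  then have [measurable]: "fs n \<in> borel_measurable borel" by simp
  have "fs (Suc n) \<in> borel_measurable borel" unfolding fs_Suc by measurable
  moreover have "bnd \<nu> (fs (Suc n)) r" unfolding fs_Suc using Suc by (intro T_bnd) auto
  moreover have "\<forall>t<0. fs (Suc n) t = 0" unfolding fs_Suc by (simp add: Tm_def)
  ultimately show ?case by blast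
qed

lemma fs_meas[measurable]: "fs n \<in> borel_measurable borel" using fs_props by blast
lemma fs_bnd: "bnd \<nu> (fs n) r" using fs_props by blast
lemma fs_neg: "t < 0 \<Longrightarrow> fs n t = 0" using fs_props by blast

lemma fs_diff: "bnd \<nu> (\<lambda>t. fs (Suc n) t - fs n t) (r * (1/2)^n)"
proof (induction n)
  case 0
  then show ?case using fs_bnd[of 1] by (simp add: fs_0)
next
  case (Suc n)
  have "bnd \<nu> (\<lambda>t. Tm a b \<beta> \<alpha> (fs (Suc n)) t - Tm a b \<beta> \<alpha> (fs n) t) (r * (1/2)^n / 2)"
    by (rule T_contr[OF fs_meas fs_meas fs_bnd fs_bnd Suc.IH])
  then show ?case by (simp add: fs_Suc[of "Suc n"] fs_Suc[of n] mult_ac)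
qed

lemma fs_cauchy:
  assumes t: "0 \<le> t"
  shows "norm (fs (k + n) t - fs n t) \<le> r * w \<nu> t * (2 * (1/2)^n - 2 * (1/2)^(k + n))"
proof (induction k)
  case 0
  then show ?case by simp
next
  case (Suc k)
  have "norm (fs (Suc k + n) t - fs n t) \<le> norm (fs (Suc (k + n)) t - fs (k + n) t) + norm (fs (k + n) t - fs n t)"
    by (rule order_trans[OF _ norm_triangle_ineq]) simp
  also have "\<dots> \<le> r * (1/2)^(k + n) * w \<nu> t + r * w \<nu> t * (2 * (1/2)^n - 2 * (1/2)^(k + n))"
    using fs_diff[of "k + n"] t Suc.IH unfolding bnd_def by (intro add_mono) auto
  also have "\<dots> = r * w \<nu> t * (2 * (1/2)^n - 2 * (1/2)^(Suc k + n))"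
    by (simp add: algebra_simps)
  finally show ?case .
qed

lemma fs_summable: "summable (\<lambda>k. fs (Suc k) t - fs k t)"
proof (cases "0 \<le> t")
  case True
  show ?thesis
  proof (rule summable_comparison_test)
    show "\<exists>N. \<forall>n\<ge>N. norm (fs (Suc n) t - fs n t) \<le> r * w \<nu> t * (1/2)^n"
      using fs_diff True unfolding bnd_def by (auto simp: mult_ac)
    show "summable (\<lambda>n. r * w \<nu> t * (1/2 :: real)^n)"
      by (intro summable_mult summable_geometric) auto
  qed
next
  case False
  then show ?thesis by (simp add: fs_neg)
qed

definition FF :: "real \<Rightarrow> complex" where "FF t = lim (\<lambda>n. fs n t)"

lemma fs_lim: "(\<lambda>n. fs n t) \<longlonglongrightarrow> FF t"
proof -
  have "(\<lambda>n. \<Sum>k<n. fs (Suc k) t - fs k t) \<longlonglongrightarrow> suminf (\<lambda>k. fs (Suc k) t - fs k t)"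
    by (rule summable_LIMSEQ[OF fs_summable])
  moreover have "(\<Sum>k<n. fs (Suc k) t - fs k t) = fs n t" for n
    by (subst sum_lessThan_telescope) (simp add: fs_0)
  ultimately have "convergent (\<lambda>n. fs n t)" by (auto simp: convergent_def)
  then show ?thesis unfolding FF_def by (rule convergent_LIMSEQ_iff[THEN iffD1])
qed

lemma FF_meas[measurable]: "FF \<in> borel_measurable borel"
  by (rule borel_measurable_LIMSEQ_metric[OF fs_meas fs_lim])

lemma FF_neg: "t < 0 \<Longrightarrow> FF t = 0"
  using fs_lim[of t] by (simp add: fs_neg LIMSEQ_const_iff)

lemma FF_bnd: "bnd \<nu> FF r"
  unfolding bnd_def
proof (intro allI impI)
  fix t :: real assume t: "0 \<le> t"
  show "norm (FF t) \<le> r * w \<nu> t"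
    by (rule LIMSEQ_le_const2[OF tendsto_norm[OF fs_lim]]) (use fs_bnd t in \<open>auto simp: bnd_def\<close>)
qed

lemma FF_diff: "bnd \<nu> (\<lambda>t. FF t - fs n t) (r * (2 * (1/2)^n))"
  unfolding bnd_def
proof (intro allI impI)
  fix t :: real assume t: "0 \<le> t"
  have "(\<lambda>k. norm (fs (k + n) t - fs n t)) \<longlonglongrightarrow> norm (FF t - fs n t)"
    using LIMSEQ_ignore_initial_segment[OF fs_lim[of t], of n] by (intro tendsto_norm tendsto_diff tendsto_const)
  then have "norm (FF t - fs n t) \<le> r * w \<nu> t * (2 * (1/2)^n)"
  proof (rule LIMSEQ_le_const2)
    have le: "r * w \<nu> t * (2 * (1/2)^n - 2 * (1/2)^(k + n)) \<le> r * w \<nu> t * (2 * (1/2)^n)" for k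
      using r0 w_pos[OF t, of \<nu>] by (intro mult_left_mono) auto
    show "\<exists>N. \<forall>k\<ge>N. norm (fs (k + n) t - fs n t) \<le> r * w \<nu> t * (2 * (1/2)^n)"
    proof (intro exI allI impI)
      fix k :: nat
      show "norm (fs (k + n) t - fs n t) \<le> r * w \<nu> t * (2 * (1/2)^n)"
        by (rule order_trans[OF fs_cauchy[OF t, of k n] le])
    qed
  qed
  then show "norm (FF t - fs n t) \<le> r * (2 * (1/2)^n) * w \<nu> t" by (simp add: mult_ac)
qed

lemma FF_fix: "Tm a b \<beta> \<alpha> FF t = FF t"
proof (cases "0 \<le> t")
  case t: True
  have "(\<lambda>n. fs (Suc n) t - Tm a b \<beta> \<alpha> FF t) \<longlonglongrightarrow> 0"
  proof (rule Lim_null_comparison)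
    show "\<forall>\<^sub>F n in sequentially. norm (fs (Suc n) t - Tm a b \<beta> \<alpha> FF t) \<le> r * w \<nu> t * (1/2)^n"
    proof (intro always_eventually allI)
      fix n
      have "bnd \<nu> (\<lambda>t. Tm a b \<beta> \<alpha> FF t - Tm a b \<beta> \<alpha> (fs n) t) (r * (2 * (1/2)^n) / 2)"
        by (rule T_contr[OF FF_meas fs_meas FF_bnd fs_bnd FF_diff])
      then have "norm (Tm a b \<beta> \<alpha> FF t - fs (Suc n) t) \<le> r * (2 * (1/2)^n) / 2 * w \<nu> t"
        using t unfolding bnd_def by (simp add: fs_Suc)
      then show "norm (fs (Suc n) t - Tm a b \<beta> \<alpha> FF t) \<le> r * w \<nu> t * (1/2)^n"
        by (simp add: norm_minus_commute mult_ac)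
    qed
    show "(\<lambda>n. r * w \<nu> t * (1/2 :: real)^n) \<longlonglongrightarrow> 0"
      by (intro tendsto_mult_right_zero LIMSEQ_power_zero) auto
  qed
  then have "(\<lambda>n. (fs (Suc n) t - Tm a b \<beta> \<alpha> FF t) + Tm a b \<beta> \<alpha> FF t) \<longlonglongrightarrow> 0 + Tm a b \<beta> \<alpha> FF t"
    by (intro tendsto_add tendsto_const)
  then have "(\<lambda>n. fs (Suc n) t) \<longlonglongrightarrow> Tm a b \<beta> \<alpha> FF t" by simp
  moreover have "(\<lambda>n. fs (Suc n) t) \<longlonglongrightarrow> FF t" using fs_lim by (rule LIMSEQ_Suc)
  ultimately show ?thesis by (rule LIMSEQ_unique)
next
  case False
  then show ?thesis by (simp add: Tm_def FF_neg)
qed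

end


lemma L1: "t * c \<le> (0::real) \<Longrightarrow> - 1 \<le> c \<Longrightarrow> (1 - c) / 2 \<le> 1 - 2 * t * c + t\<^sup>2"
proof -
  assume a: "t * c \<le> (0::real)" "- 1 \<le> c"
  have e: "2 * (1 - 2 * t * c + t\<^sup>2) = 2 - 4 * (t * c) + 2 * t\<^sup>2" by (simp add: algebra_simps)
  have "1 - c \<le> 2 * (1 - 2 * t * c + t\<^sup>2)" unfolding e using a zero_le_power2[of t] by linarith
  then show ?thesis by simp
qed
lemma lin: "0 \<le> x \<Longrightarrow> x \<le> y \<Longrightarrow> 0 \<le> (q::real) \<Longrightarrow> x \<le> 2 * q + 2 * y" by linarith
lemma L2: "0 < c \<Longrightarrow> c < (1::real) \<Longrightarrow> (1 - c) / 2 \<le> 1 - 2 * t * c + t\<^sup>2"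
proof -
  assume a: "0 < c" "c < (1::real)"
  have e: "2 * (1 - 2 * t * c + t^2) = 2 * (t - c)^2 + 2 * (1 - c * c)" by (simp add: power2_eq_square algebra_simps)
  have "0 \<le> (1 - c) * c" using a by simp
  then have "1 - c \<le> 1 - c * c" by (simp add: algebra_simps)
  then have "1 - c \<le> 2 * (1 - 2 * t * c + t^2)" unfolding e using lin[of "1 - c" "1 - c * c" "(t - c)^2"] a by simp
  then show ?thesis by simp
qed

lemma cos_lt1:
  assumes "0 < \<alpha>" "\<alpha> < 2 * pi" shows "cos \<alpha> < 1"
proof -
  have "cos \<alpha> \<noteq> 1"
  proof
    assume "cos \<alpha> = 1"
    then obtain n :: int where n: "\<alpha> = n * 2 * pi" by (auto simp: cos_one_2pi_int)
    then have "0 < real_of_int n" "real_of_int n < 1" using assms pi_gt_zero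
      by (auto simp: zero_less_mult_iff mult_less_cancel_right2)
    then have "0 < n" "n < 1" by simp_all
    then show False by simp
  qed
  then show ?thesis using cos_le_one[of \<alpha>] by linarith
qed

lemma K_ex:
  assumes "0 < \<alpha>" "\<alpha> < 2 * pi"
  shows "\<exists>K. \<forall>t\<ge>0. norm (1 / (1 - ray_point \<alpha> t)) \<le> K"
proof -
  define c where "c = cos \<alpha>"
  have c1: "c < 1" unfolding c_def using cos_lt1[OF assms] .
  have cm: "-1 \<le> c" unfolding c_def by simp
  define m where "m = sqrt ((1 - c) / 2)"
  have m0: "0 < m" unfolding m_def using c1 by simp
  have low: "m \<le> norm (1 - ray_point \<alpha> t)" if t: "0 \<le> t" for t
  proof -
    have "(norm (1 - ray_point \<alpha> t))^2 = (1 - t * cos \<alpha>)^2 + (t * sin \<alpha>)^2"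
      unfolding ray_point_def cmod_power2 by (simp add: Re_exp Im_exp)
    also have "\<dots> = 1 - 2 * t * c + t^2"
    proof -
      have s: "(t * sin \<alpha>)^2 = t^2 - t^2 * (cos \<alpha>)^2" by (simp add: power_mult_distrib sin_squared_eq algebra_simps)
      show ?thesis unfolding c_def s by (simp add: power2_eq_square algebra_simps)
    qed
    finally have eq: "(norm (1 - ray_point \<alpha> t))^2 = 1 - 2 * t * c + t^2" .
    have "(1 - c) / 2 \<le> 1 - 2 * t * c + t^2"
    proof (cases "c \<le> 0")
      case True
      then have p: "t * c \<le> 0" using t by (simp add: mult_nonneg_nonpos)
      show ?thesis by (rule L1[OF p cm])
    next
      case False
      then show ?thesis using c1 by (intro L2) auto
    qed
    then have "m^2 \<le> (norm (1 - ray_point \<alpha> t))^2" unfolding eq m_def using c1 by simp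
    then show ?thesis using m0 by (simp add: power2_le_iff_abs_le abs_le_iff)
  qed
  show ?thesis
  proof (intro exI allI impI)
    fix t :: real assume t: "0 \<le> t"
    have "norm (1 / (1 - ray_point \<alpha> t)) = 1 / norm (1 - ray_point \<alpha> t)" by (simp add: norm_divide)
    also have "\<dots> \<le> 1 / m" using low[OF t] m0 by (intro divide_left_mono) (auto intro!: mult_pos_pos)
    finally show "norm (1 / (1 - ray_point \<alpha> t)) \<le> 1 / m" .
  qed
qed

lemma c1_lemma:
  fixes K r \<nu> :: real
  assumes K: "0 \<le> K" and r: "0 < r" and nu: "3 \<le> \<nu>" "6 * K / r \<le> \<nu>" and t: "0 \<le> t"
  shows "K * t \<le> r / 2 * w \<nu> t"
proof -
  define l where "l = \<nu> / 3"
  have l1: "1 \<le> l" and l2: "2 * K / r \<le> l" using nu r unfolding l_def by (auto simp: field_simps)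
  have "exp (\<nu> * t) = exp (l * t) ^ 3" unfolding l_def by (simp flip: exp_of_nat_mult)
  also have "\<dots> \<ge> (1 + l * t) ^ 3" using l1 t by (intro power_mono exp_ge_add_one_self) auto
  finally have e: "(1 + l * t) ^ 3 \<le> exp (\<nu> * t)" .
  have tl: "t \<le> l * t" using mult_right_mono[OF l1 t] by simp
  have "(1 + t)^2 \<le> (1 + l * t)^2" using tl t by (intro power_mono) auto
  then have "(l * t) * (1 + t)^2 \<le> (1 + l * t) * (1 + l * t)^2"
    using l1 t by (intro mult_mono) auto
  also have "\<dots> = (1 + l * t) ^ 3" by (simp add: power2_eq_square power3_eq_cube)
  finally have A: "(l * t) * (1 + t)^2 \<le> exp (\<nu> * t)" using e by linarith
  have "(2 * K / r) * t * (1 + t)^2 \<le> l * t * (1 + t)^2" using l2 t by (intro mult_right_mono) auto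
  then have "(2 * K / r) * t * (1 + t)^2 \<le> exp (\<nu> * t)" using A by linarith
  then have "K * t * (1 + t)^2 \<le> r / 2 * exp (\<nu> * t)" using r by (simp add: field_simps)
  then show ?thesis unfolding w_def using t by (simp add: field_simps)
qed


lemma ray_int_cong:
  "(\<And>u. 0 \<le> u \<Longrightarrow> u \<le> t \<Longrightarrow> f u = g u) \<Longrightarrow> ray_int \<alpha> f t = ray_int \<alpha> g t"
  unfolding ray_int_def by (subst set_lebesgue_integral_cong[where g=g]) auto

lemma ray_conv_cong:
  "(\<And>u. 0 \<le> u \<Longrightarrow> u \<le> t \<Longrightarrow> f u = f' u) \<Longrightarrow> (\<And>u. 0 \<le> u \<Longrightarrow> u \<le> t \<Longrightarrow> g u = g' u)
    \<Longrightarrow> ray_conv \<alpha> f g t = ray_conv \<alpha> f' g' t"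
  unfolding ray_conv_def by (subst set_lebesgue_integral_cong[where g="\<lambda>u. f' u * g' (t - u)"]) auto

definition rst :: "(real \<Rightarrow> complex) \<Rightarrow> real \<Rightarrow> complex" where
  "rst f t = indicator {0..} t *\<^sub>R f t"

lemma rst_pos: "0 \<le> t \<Longrightarrow> rst f t = f t" unfolding rst_def by simp

lemma solves_rst:
  assumes "solves_eq a b \<beta> \<alpha> f" shows "solves_eq a b \<beta> \<alpha> (rst f)"
  using assms unfolding solves_eq_def
proof (elim AE_mp, intro AE_I2 impI)
  fix t :: real assume h: "0 \<le> t \<longrightarrow> f t = 1 / (1 - ray_point \<alpha> t) *
              (ray_point \<alpha> t - \<beta> * ray_int \<alpha> f t + a * ray_conv \<alpha> f f t + b * ray_conv \<alpha> (ray_conv \<alpha> f f) f t)"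
    and t: "0 \<le> t"
  have i: "ray_int \<alpha> (rst f) t = ray_int \<alpha> f t" by (rule ray_int_cong) (simp add: rst_pos)
  have c: "ray_conv \<alpha> (rst f) (rst f) u = ray_conv \<alpha> f f u" if "0 \<le> u" for u
    by (rule ray_conv_cong) (auto simp: rst_pos)
  have d: "ray_conv \<alpha> (ray_conv \<alpha> (rst f) (rst f)) (rst f) t = ray_conv \<alpha> (ray_conv \<alpha> f f) f t"
    by (rule ray_conv_cong) (auto simp: rst_pos c)
  show "rst f t = 1 / (1 - ray_point \<alpha> t) *
              (ray_point \<alpha> t - \<beta> * ray_int \<alpha> (rst f) t + a * ray_conv \<alpha> (rst f) (rst f) t + b * ray_conv \<alpha> (ray_conv \<alpha> (rst f) (rst f)) (rst f) t)"
    using h t by (simp add: i c d rst_pos)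
qed

lemma L1_rst:
  assumes "f \<in> L1nu \<mu>"
  shows "rst f \<in> borel_measurable borel" "Nm \<mu> (na (rst f)) < \<infinity>"
proof -
  have m: "(\<lambda>x. indicator {0..} x *\<^sub>R f x) \<in> borel_measurable lborel"
    using assms unfolding L1nu_def set_borel_measurable_def by auto
  then show "rst f \<in> borel_measurable borel" unfolding rst_def[abs_def] by simp
  have "integrable lborel (\<lambda>x. indicator {0..} x *\<^sub>R (norm (f x) * exp (- \<mu> * x)))"
    using assms unfolding L1nu_def set_integrable_def by auto
  then have "(\<integral>\<^sup>+x. ennreal (norm (indicator {0..} x *\<^sub>R (norm (f x) * exp (- \<mu> * x)))) \<partial>lborel) < \<infinity>"
    unfolding integrable_iff_bounded by auto
  moreover have "(\<integral>\<^sup>+x. ennreal (norm (indicator {0..} x *\<^sub>R (norm (f x) * exp (- \<mu> * x)))) \<partial>lborel) = Nm \<mu> (na (rst f))"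
    unfolding Nm_def rst_def by (intro nn_integral_cong) (auto simp: indicator_def ennreal_mult)
  ultimately show "Nm \<mu> (na (rst f)) < \<infinity>" by simp
qed

lemma L1_from_Nm:
  assumes [measurable]: "f \<in> borel_measurable borel" and fin: "Nm \<mu> (na f) < \<infinity>"
  shows "f \<in> L1nu \<mu>"
  unfolding L1nu_def set_borel_measurable_def set_integrable_def
proof (intro CollectI conjI)
  show "(\<lambda>x. indicator {0..} x *\<^sub>R f x) \<in> borel_measurable lborel" by measurable
  show "integrable lborel (\<lambda>x. indicator {0..} x *\<^sub>R (norm (f x) * exp (- \<mu> * x)))"
  proof (rule integrableI_bounded)
    show "(\<lambda>x. indicator {0..} x *\<^sub>R (norm (f x) * exp (- \<mu> * x))) \<in> borel_measurable lborel" by measurable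
    have "(\<integral>\<^sup>+x. ennreal (norm (indicator {0..} x *\<^sub>R (norm (f x) * exp (- \<mu> * x)))) \<partial>lborel) = Nm \<mu> (na f)"
      unfolding Nm_def by (intro nn_integral_cong) (auto simp: indicator_def ennreal_mult)
    then show "(\<integral>\<^sup>+x. ennreal (norm (indicator {0..} x *\<^sub>R (norm (f x) * exp (- \<mu> * x)))) \<partial>lborel) < \<infinity>"
      using fin by simp
  qed
qed


lemma existence:
  assumes "0 < \<alpha>" "\<alpha> < 2 * pi"
  shows "\<exists>F \<nu>. 1 \<le> \<nu> \<and> F \<in> L1nu \<nu> \<and> solves_eq a b \<beta> \<alpha> F"
proof -
  obtain K0 where K0: "\<And>t. 0 \<le> t \<Longrightarrow> norm (1 / (1 - ray_point \<alpha> t)) \<le> K0"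
    using K_ex[OF assms] by blast
  define K where "K = max K0 1"
  have K: "\<And>t. 0 \<le> t \<Longrightarrow> norm (1 / (1 - ray_point \<alpha> t)) \<le> K" unfolding K_def using K0 by (meson max.coboundedI1)
  have K1: "1 \<le> K" unfolding K_def by simp
  define X where "X = 16 * norm a + 192 * norm b"
  have X0: "0 \<le> X" unfolding X_def by simp
  define r where "r = 1 / (4 * K * X + 1)"
  have r0: "0 < r" unfolding r_def using K1 X0 by (simp add: add_nonneg_pos)
  have y: "1 \<le> 4 * K * X + 1" using K1 X0 by simp
  have r1: "r \<le> 1" unfolding r_def using y by simp
  define \<nu> where "\<nu> = max 4 (max (8 * K * norm \<beta>) (6 * K / r))"
  have nu4: "4 \<le> \<nu>" unfolding \<nu>_def by simp
  have nu3: "3 \<le> \<nu>" "6 * K / r \<le> \<nu>" unfolding \<nu>_def by auto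
  have nub: "8 * K * norm \<beta> \<le> \<nu>" unfolding \<nu>_def by simp
  interpret exset a b \<beta> \<alpha> K \<nu> r
  proof
    show "\<And>t. 0 \<le> t \<Longrightarrow> norm (1 / (1 - ray_point \<alpha> t)) \<le> K" by (rule K)
    show "4 \<le> \<nu>" by (rule nu4)
    show "\<And>t. 0 \<le> t \<Longrightarrow> K * t \<le> r / 2 * w \<nu> t"
      using K1 r0 nu3 by (intro c1_lemma) auto
    show "K * norm \<beta> * (2 / \<nu>) \<le> 1/4"
      using nub nu4 by (simp add: field_simps)
    have "r^2 \<le> r" using r0 r1 by (simp add: power2_eq_square mult_le_cancel_left1)
    then have "norm b * r^2 \<le> norm b * r" by (intro mult_left_mono) auto
    then have "16 * norm a * r + 192 * norm b * r^2 \<le> X * r" unfolding X_def by (simp add: algebra_simps)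
    then have "K * (16 * norm a * r + 192 * norm b * r^2) \<le> K * (X * r)"
      using K1 by (intro mult_left_mono) auto
    also have "\<dots> = (K * X) / (4 * (K * X) + 1)" unfolding r_def by (simp add: mult.assoc)
    also have "\<dots> \<le> 1/4"
    proof -
      have p: "0 \<le> K * X" using K1 X0 by simp
      show ?thesis using p by (simp add: pos_divide_le_eq add_nonneg_pos)
    qed
    finally show "K * (16 * norm a * r + 192 * norm b * r^2) \<le> 1/4" .
    show "0 < r" "r \<le> 1" by (fact r0, fact r1)
  qed
  have fin: "Nm (\<nu> + 1) (na FF) < \<infinity>"
  proof -
    have "Nm (\<nu> + 1) (na FF) \<le> (\<integral>\<^sup>+t. ennreal r * (indicator {0..} t * 1 * ennreal (exp (- 1 * t))) \<partial>lborel)"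
      unfolding Nm_def
    proof (intro nn_integral_mono)
      fix t :: real
      show "indicator {0..} t * na FF t * ennreal (exp (- (\<nu> + 1) * t)) \<le> ennreal r * (indicator {0..} t * 1 * ennreal (exp (- 1 * t)))"
      proof (cases "0 \<le> t")
        case True
        have "norm (FF t) * exp (- (\<nu> + 1) * t) \<le> r * w \<nu> t * exp (- (\<nu> + 1) * t)"
          using FF_bnd True unfolding bnd_def by (intro mult_right_mono) auto
        also have "\<dots> = r * (exp (- t) / (1 + t)^2)"
          unfolding w_def by (simp add: algebra_simps flip: exp_add)
        also have "\<dots> \<le> r * exp (- t)"
          using True r0 by (intro mult_left_mono) (auto simp: field_simps)
        finally have "ennreal (norm (FF t) * exp (- (\<nu> + 1) * t)) \<le> ennreal (r * exp (- t))"
          by (rule ennreal_leI)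
        then show ?thesis using True r0 by (simp add: ennreal_mult)
      qed simp
    qed
    also have "\<dots> = ennreal r * Nm 1 (\<lambda>_. 1)"
      unfolding Nm_def by (rule nn_integral_cmult) measurable
    also have "\<dots> = ennreal r" using Nm_one[of 1] by simp
    finally show ?thesis by (simp add: order_le_less_trans)
  qed
  have "FF \<in> L1nu (\<nu> + 1)" by (rule L1_from_Nm[OF FF_meas fin])
  moreover have "solves_eq a b \<beta> \<alpha> FF"
    unfolding solves_eq_def
  proof (intro AE_I2 impI)
    fix t :: real assume t: "0 \<le> t"
    show "FF t = 1 / (1 - ray_point \<alpha> t) * (ray_point \<alpha> t - \<beta> * ray_int \<alpha> FF t + a * ray_conv \<alpha> FF FF t + b * ray_conv \<alpha> (ray_conv \<alpha> FF FF) FF t)"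
      using FF_fix[of t] t unfolding Tm_def by simp
  qed
  moreover have "1 \<le> \<nu> + 1" using nu4 by simp
  ultimately show ?thesis by blast
qed

theorem mainTheorem10:
  fixes a b \<beta> :: complex and \<alpha> :: real
  assumes "0 < \<alpha>" and "\<alpha> < 2 * pi"
  shows "\<exists>\<nu>0 > 0. \<exists>F. (\<exists>\<nu>\<ge>\<nu>0. F \<in> L1nu \<nu>) \<and> solves_eq a b \<beta> \<alpha> F \<and>
           (\<forall>G. (\<exists>\<nu>\<ge>\<nu>0. G \<in> L1nu \<nu>) \<and> solves_eq a b \<beta> \<alpha> G \<longrightarrow>
                (AE t in lborel. t \<ge> 0 \<longrightarrow> G t = F t))"
proof -
  obtain F \<nu> where F: "1 \<le> \<nu>" "F \<in> L1nu \<nu>" "solves_eq a b \<beta> \<alpha> F"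
    using existence[OF assms] by blast
  obtain K where K: "\<And>t. 0 \<le> t \<Longrightarrow> norm (1 / (1 - ray_point \<alpha> t)) \<le> K"
    using K_ex[OF assms] by blast
  have uniq: "AE t in lborel. t \<ge> 0 \<longrightarrow> G t = F t"
    if G: "\<exists>\<nu>\<ge>1. G \<in> L1nu \<nu>" "solves_eq a b \<beta> \<alpha> G" for G
  proof -
    obtain \<nu>' where \<nu>': "1 \<le> \<nu>'" "G \<in> L1nu \<nu>'" using G(1) by blast
    define \<mu> where "\<mu> = max \<nu> \<nu>'"
    have mu: "0 < \<mu>" "\<nu> \<le> \<mu>" "\<nu>' \<le> \<mu>" using F(1) unfolding \<mu>_def by auto
    have nF: "Nm \<mu> (na (rst F)) < \<infinity>"
      using le_less_trans[OF Nm_mono_mu[OF mu(2)] L1_rst(2)[OF F(2)]] .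
    have nG: "Nm \<mu> (na (rst G)) < \<infinity>"
      using le_less_trans[OF Nm_mono_mu[OF mu(3)] L1_rst(2)[OF \<nu>'(2)]] .
    have "AE t in lborel. 0 \<le> t \<longrightarrow> rst G t = rst F t"
      by (rule uniq_core[OF L1_rst(1)[OF F(2)] L1_rst(1)[OF \<nu>'(2)] nF nG mu(1) K solves_rst[OF F(3)] solves_rst[OF G(2)]])
    then show ?thesis by eventually_elim (auto simp: rst_pos)
  qed
  show ?thesis
  proof (rule exI[of _ "1::real"], intro conjI exI[of _ F])
    show "(0::real) < 1" by simp
    show "\<exists>\<nu>'\<ge>1. F \<in> L1nu \<nu>'" using F by blast
    show "solves_eq a b \<beta> \<alpha> F" by (rule F(3))
    show "\<forall>G. (\<exists>\<nu>\<ge>1. G \<in> L1nu \<nu>) \<and> solves_eq a b \<beta> \<alpha> G \<longrightarrow> (AE t in lborel. t \<ge> 0 \<longrightarrow> G t = F t)"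
      using uniq by blast
  qed
qed


end
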